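(* For any $n\in\mathbb N$, $\alpha_1,\dots,\alpha_n\ge0$ and $x_1,\dots,x_n\in\mathbb R$, there exists at most one Nash equilibrium for mean-variance optimization on $[0,T]$.
   Context: Fix $T>0$, a filtered probability space carrying a standard Brownian motion $W$, constants $S_0\in\mathbb R$, $\sigma\ge0$, $\gamma\ge0$, $\lambda>0$, and a deterministic continuous $b:[0,T]\to\mathbb R$; unaffected price $S^0(t)=S_0+\sigma W(t)+\int_0^tb(s)ds$. $\mathscr X_{\det}(x,T)$ is the set of deterministic absolutely continuous, bounded functions $X$ on $[0,T]$ with $\int_0^T\dot X(t)^2dt<\infty$, $X(0)=x$, $X(T)=0$. When $n$ agents use $X_1,\dots,X_n$, the price is $S^{X_1,\dots,X_n}(t)=S^0(t)+\gamma\sum_{j=1}^n(X_j(t)-X_j(0))+\lambda\sum_{j=1}^n\dot X_j(t)$ and agent $i$'s revenues are $\mathscr R(X_i|\mathbf X_{-i})=-\int_0^T\dot X_i(t)S^{X_1,\dots,X_n}(t)dt$, $\mathbf X_{-i}=\{X_j:j\neq i\}$. A Nash equilibrium for mean-variance optimization (initial positions $x_i$, risk aversions $\alpha_i$) is a collection $X_i^*\in\mathscr X_{\det}(x_i,T)$ such that each $X_i^*$ maximizes $X\mapsto\mathbb E[\mathscr R(X|\mathbf X^*_{-i})]-\frac{\alpha_i}{2}\mathrm{var}(\mathscr R(X|\mathbf X^*_{-i}))$ over $\mathscr X_{\det}(x_i,T)$ (agent $i$ uses $X$, agents $j\neq i$ use $X_j^*$). *)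

theory Defs
  imports "HOL-Probability.Probability"
begin

definition std_brownian_motion :: "'a measure \<Rightarrow> (real \<Rightarrow> 'a \<Rightarrow> real) \<Rightarrow> bool" where
  "std_brownian_motion M W \<longleftrightarrow>
     prob_space M \<and>
     (\<forall>t\<ge>0. W t \<in> borel_measurable M) \<and>
     (\<forall>\<omega>\<in>space M. W 0 \<omega> = 0 \<and> continuous_on {0..} (\<lambda>t. W t \<omega>)) \<and>
     (\<forall>s t. 0 \<le> s \<and> s < t \<longrightarrow>
        distributed M lborel (\<lambda>\<omega>. W t \<omega> - W s \<omega>) (normal_density 0 (sqrt (t - s)))) \<and>
     (\<forall>ts :: real list. sorted_wrt (<) ts \<and> (\<forall>t\<in>set ts. 0 \<le> t) \<longrightarrow>
        prob_space.indep_vars M (\<lambda>_. borel)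
          (\<lambda>k \<omega>. W (ts ! Suc k) \<omega> - W (ts ! k) \<omega>) {..<length ts - 1})"

definition admissible :: "real \<Rightarrow> real \<Rightarrow> (real \<Rightarrow> real) \<Rightarrow> (real \<Rightarrow> real) \<Rightarrow> bool" where
  "admissible x T X v \<longleftrightarrow>
     v \<in> borel_measurable borel \<and>
     set_integrable lborel {0..T} (\<lambda>t. (v t)\<^sup>2) \<and>
     (\<forall>t\<in>{0..T}. X t = x + (\<integral>s\<in>{0..t}. v s \<partial>lborel)) \<and>
     X T = 0"

definition unaffected_price ::
  "real \<Rightarrow> real \<Rightarrow> (real \<Rightarrow> real) \<Rightarrow> (real \<Rightarrow> 'a \<Rightarrow> real) \<Rightarrow> real \<Rightarrow> 'a \<Rightarrow> real" where
  "unaffected_price S0 \<sigma> b W t \<omega> = S0 + \<sigma> * W t \<omega> + (\<integral>s\<in>{0..t}. b s \<partial>lborel)"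

definition revenue ::
  "real \<Rightarrow> real \<Rightarrow> (real \<Rightarrow> real) \<Rightarrow> (real \<Rightarrow> 'a \<Rightarrow> real) \<Rightarrow> real \<Rightarrow> real \<Rightarrow> real \<Rightarrow> nat \<Rightarrow> nat
   \<Rightarrow> (nat \<Rightarrow> real \<Rightarrow> real) \<Rightarrow> (nat \<Rightarrow> real \<Rightarrow> real) \<Rightarrow> (real \<Rightarrow> real) \<Rightarrow> (real \<Rightarrow> real) \<Rightarrow> 'a \<Rightarrow> real" where
  "revenue S0 \<sigma> b W \<gamma> lam T n i X v Y w \<omega> =
     - (\<integral>t\<in>{0..T}. w t *
          (unaffected_price S0 \<sigma> b W t \<omega>
           + \<gamma> * ((Y t - Y 0) + (\<Sum>j\<in>{..<n} - {i}. X j t - X j 0))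
           + lam * (w t + (\<Sum>j\<in>{..<n} - {i}. v j t))) \<partial>lborel)"

definition mv_objective ::
  "'a measure \<Rightarrow> real \<Rightarrow> real \<Rightarrow> (real \<Rightarrow> real) \<Rightarrow> (real \<Rightarrow> 'a \<Rightarrow> real) \<Rightarrow> real \<Rightarrow> real \<Rightarrow> real
   \<Rightarrow> nat \<Rightarrow> real \<Rightarrow> nat \<Rightarrow> (nat \<Rightarrow> real \<Rightarrow> real) \<Rightarrow> (nat \<Rightarrow> real \<Rightarrow> real)
   \<Rightarrow> (real \<Rightarrow> real) \<Rightarrow> (real \<Rightarrow> real) \<Rightarrow> real" where
  "mv_objective M S0 \<sigma> b W \<gamma> lam T n a i X v Y w =
     prob_space.expectation M (revenue S0 \<sigma> b W \<gamma> lam T n i X v Y w)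
     - a / 2 * prob_space.variance M (revenue S0 \<sigma> b W \<gamma> lam T n i X v Y w)"

definition nash_equilibrium_mv ::
  "'a measure \<Rightarrow> real \<Rightarrow> real \<Rightarrow> (real \<Rightarrow> real) \<Rightarrow> (real \<Rightarrow> 'a \<Rightarrow> real) \<Rightarrow> real \<Rightarrow> real \<Rightarrow> real
   \<Rightarrow> nat \<Rightarrow> (nat \<Rightarrow> real) \<Rightarrow> (nat \<Rightarrow> real) \<Rightarrow> (nat \<Rightarrow> real \<Rightarrow> real) \<Rightarrow> bool" where
  "nash_equilibrium_mv M S0 \<sigma> b W \<gamma> lam T n \<alpha> x X \<longleftrightarrow>
     (\<exists>v. (\<forall>i<n. admissible (x i) T (X i) (v i)) \<and>
          (\<forall>i<n. \<forall>Y w. admissible (x i) T Y w \<longrightarrow>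
              mv_objective M S0 \<sigma> b W \<gamma> lam T n (\<alpha> i) i X v Y w
              \<le> mv_objective M S0 \<sigma> b W \<gamma> lam T n (\<alpha> i) i X v (X i) (v i)))"

end

theory Submission
  imports Defs
begin


lemma prod_integrable_lborel:
  fixes g :: "real \<Rightarrow> real"
  assumes g: "integrable lborel g"
  shows "integrable (lborel \<Otimes>\<^sub>M lborel) (\<lambda>(s,t). g s * g t)"
proof (rule integrableI_bounded)
  have gm[measurable]: "g \<in> borel_measurable lborel" using g by auto
  show "(\<lambda>(s,t). g s * g t) \<in> borel_measurable (lborel \<Otimes>\<^sub>M lborel)" by measurable
  have fin: "(\<integral>\<^sup>+x. ennreal (norm (g x)) \<partial>lborel) < \<infinity>"
    using g by (simp add: integrable_iff_bounded)
  have "(\<integral>\<^sup>+x. ennreal (norm ((\<lambda>(s,t). g s * g t) x)) \<partial>(lborel \<Otimes>\<^sub>M lborel))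
      = (\<integral>\<^sup>+s. \<integral>\<^sup>+t. ennreal (norm (g s)) * ennreal (norm (g t)) \<partial>lborel \<partial>lborel)"
    by (subst lborel.nn_integral_fst[symmetric]) (auto simp: abs_mult ennreal_mult)
  also have "\<dots> = (\<integral>\<^sup>+s. ennreal (norm (g s)) * (\<integral>\<^sup>+t. ennreal (norm (g t)) \<partial>lborel) \<partial>lborel)"
    by (subst nn_integral_cmult) auto
  also have "\<dots> = (\<integral>\<^sup>+t. ennreal (norm (g t)) \<partial>lborel) * (\<integral>\<^sup>+t. ennreal (norm (g t)) \<partial>lborel)"
    by (subst nn_integral_multc) auto
  also have "\<dots> < \<infinity>" using fin by (simp add: ennreal_mult_less_top)
  finally show "(\<integral>\<^sup>+x. ennreal (norm ((\<lambda>(s,t). g s * g t) x)) \<partial>(lborel \<Otimes>\<^sub>M lborel)) < \<infinity>" .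
qed

lemma fubini_tri:
  fixes g :: "real \<Rightarrow> real"
  assumes g: "integrable lborel g"
  shows "(\<integral>t. g t * (\<integral>s. g s * indicator {..t} s \<partial>lborel) \<partial>lborel) \<ge> 0"
proof -
  have gm[measurable]: "g \<in> borel_measurable lborel" using g by auto
  define J where "J t = (\<integral>s. g s * indicator {..t} s \<partial>lborel)" for t
  define H where "H s t = (if s \<le> t then g s * g t else 0)" for s t :: real
  have Hm: "(\<lambda>(s,t). H s t) \<in> borel_measurable (lborel \<Otimes>\<^sub>M lborel)"
    unfolding H_def by measurable
  have Hint: "integrable (lborel \<Otimes>\<^sub>M lborel) (\<lambda>(s,t). H s t)"
    by (rule Bochner_Integration.integrable_bound[OF prod_integrable_lborel[OF g] Hm]) (auto simp: H_def)
  have Jm: "J \<in> borel_measurable lborel"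
  proof -
    have "(\<lambda>(t,s). g s * (if s \<le> t then 1 else 0)) \<in> borel_measurable (lborel \<Otimes>\<^sub>M lborel)"
      by measurable
    then have "(\<lambda>t. \<integral>s. g s * (if s \<le> t then 1 else 0) \<partial>lborel) \<in> borel_measurable lborel"
      by (rule lborel.borel_measurable_lebesgue_integral)
    moreover have "(\<lambda>t. \<integral>s. g s * (if s \<le> t then 1 else 0) \<partial>lborel) = J"
      by (rule ext) (auto simp: J_def indicator_def intro!: Bochner_Integration.integral_cong)
    ultimately show ?thesis by simp
  qed
  have gabs: "integrable lborel (\<lambda>s. norm (g s))" using g by auto
  have Jb: "norm (J t) \<le> (\<integral>s. norm (g s) \<partial>lborel)" for t
  proof -
    have "norm (J t) \<le> (\<integral>s. norm (g s * indicator {..t} s) \<partial>lborel)"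
      unfolding J_def by (rule Bochner_Integration.integral_norm_bound)
    also have "\<dots> \<le> (\<integral>s. norm (g s) \<partial>lborel)"
    proof (rule integral_mono[OF _ gabs])
      have "integrable lborel (\<lambda>s. g s * indicator {..t} s)"
        using integrable_mult_indicator[of "{..t}" lborel g] g by (simp add: mult.commute)
      then show "integrable lborel (\<lambda>s. norm (g s * indicator {..t} s))" by (rule integrable_norm)
    qed (auto simp: indicator_def)
    finally show ?thesis .
  qed
  have gJ: "integrable lborel (\<lambda>t. g t * J t)"
  proof (rule Bochner_Integration.integrable_bound[where f="\<lambda>t. norm (g t) * (\<integral>s. norm (g s) \<partial>lborel)"])
    show "integrable lborel (\<lambda>t. norm (g t) * (\<integral>s. norm (g s) \<partial>lborel))"
      using gabs by auto
    show "(\<lambda>t. g t * J t) \<in> borel_measurable lborel" using Jm by measurable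
    show "AE x in lborel. norm (g x * J x) \<le> norm (norm (g x) * (\<integral>s. norm (g s) \<partial>lborel))"
      using Jb by (auto simp: abs_mult intro!: mult_left_mono)
  qed
  have F: "(\<integral>t. (\<integral>s. H s t \<partial>lborel) \<partial>lborel) = (\<integral>s. (\<integral>t. H s t \<partial>lborel) \<partial>lborel)"
    by (rule lborel_pair.Fubini_integral[OF Hint])
  have L: "(\<integral>s. H s t \<partial>lborel) = g t * J t" for t
  proof -
    have "(\<integral>s. H s t \<partial>lborel) = (\<integral>s. g t * (g s * indicator {..t} s) \<partial>lborel)"
      unfolding H_def by (rule Bochner_Integration.integral_cong) (auto simp: indicator_def)
    also have "\<dots> = g t * J t" unfolding J_def by simp
    finally show ?thesis .
  qed
  have R: "(\<integral>t. H s t \<partial>lborel) = g s * ((\<integral>t. g t \<partial>lborel) - J s)" for s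
  proof -
    have i1: "integrable lborel (\<lambda>t. g t * indicator {..<s} t)"
      using integrable_mult_indicator[of "{..<s}" lborel g] g by (simp add: mult.commute)
    have "(\<integral>t. H s t \<partial>lborel) = (\<integral>t. g s * (g t - g t * indicator {..<s} t) \<partial>lborel)"
      unfolding H_def by (rule Bochner_Integration.integral_cong) (auto simp: indicator_def)
    also have "\<dots> = g s * ((\<integral>t. g t \<partial>lborel) - (\<integral>t. g t * indicator {..<s} t \<partial>lborel))"
      using g i1 by simp
    also have "(\<integral>t. g t * indicator {..<s} t \<partial>lborel) = J s"
      unfolding J_def
      by (rule integral_cong_AE) (auto intro!: eventually_mono[OF AE_lborel_singleton[of s]] simp: indicator_def)
    finally show ?thesis .
  qed
  have "(\<integral>t. g t * J t \<partial>lborel) = (\<integral>s. g s * ((\<integral>t. g t \<partial>lborel) - J s) \<partial>lborel)"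
    using F by (simp add: L R)
  also have "\<dots> = (\<integral>s. g s \<partial>lborel) * (\<integral>t. g t \<partial>lborel) - (\<integral>s. g s * J s \<partial>lborel)"
    using g gJ by (simp add: right_diff_distrib)
  finally have "2 * (\<integral>t. g t * J t \<partial>lborel) = (\<integral>s. g s \<partial>lborel)\<^sup>2"
    by (simp add: power2_eq_square)
  then show ?thesis unfolding J_def[symmetric]
    by (metis zero_le_power2 zero_le_mult_iff zero_less_numeral not_numeral_le_zero)
qed


definition L2on :: "real \<Rightarrow> (real \<Rightarrow> real) \<Rightarrow> bool" where
  "L2on T f \<longleftrightarrow> f \<in> borel_measurable borel \<and> set_integrable lborel {0..T} (\<lambda>t. (f t)\<^sup>2)"

lemma L2_L1:
  assumes "L2on T f" shows "set_integrable lborel {0..T} f"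
proof -
  have fm[measurable]: "f \<in> borel_measurable borel" and f2: "set_integrable lborel {0..T} (\<lambda>t. (f t)\<^sup>2)"
    using assms by (auto simp: L2on_def)
  have i1: "integrable lborel (\<lambda>t. indicator {0..T} t * (1 + (f t)\<^sup>2))"
  proof -
    have "integrable lborel (\<lambda>t. indicator {0..T} t :: real)"
      by (rule integrable_real_indicator) (auto simp: emeasure_lborel_Icc_eq)
    moreover have "integrable lborel (\<lambda>t. indicator {0..T} t * (f t)\<^sup>2)"
      using f2 by (simp add: set_integrable_def)
    ultimately have "integrable lborel (\<lambda>t. indicator {0..T} t + indicator {0..T} t * (f t)\<^sup>2)"
      by (rule Bochner_Integration.integrable_add)
    then show ?thesis by (simp add: algebra_simps)
  qed
  show ?thesis unfolding set_integrable_def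
  proof (rule Bochner_Integration.integrable_bound[OF i1])
    show "(\<lambda>x. indicator {0..T} x *\<^sub>R f x) \<in> borel_measurable lborel" by measurable
    have "\<bar>f x\<bar> \<le> 1 + (f x)\<^sup>2" for x
    proof -
      have "0 \<le> (\<bar>f x\<bar> - 1)\<^sup>2" by simp
      moreover have "\<bar>f x\<bar> * \<bar>f x\<bar> = (f x)\<^sup>2" by (simp add: power2_eq_square)
      ultimately show ?thesis by (simp add: power2_eq_square algebra_simps)
    qed
    then show "AE x in lborel. norm (indicator {0..T} x *\<^sub>R f x) \<le> norm (indicator {0..T} x * (1 + (f x)\<^sup>2))"
      by (auto simp: indicator_def)
  qed
qed


lemma L2_mult:
  assumes "L2on T f" "L2on T g" shows "set_integrable lborel {0..T} (\<lambda>t. f t * g t)"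
proof -
  have fm[measurable]: "f \<in> borel_measurable borel" and f2: "set_integrable lborel {0..T} (\<lambda>t. (f t)\<^sup>2)"
    and gm[measurable]: "g \<in> borel_measurable borel" and g2: "set_integrable lborel {0..T} (\<lambda>t. (g t)\<^sup>2)"
    using assms by (auto simp: L2on_def)
  have i1: "integrable lborel (\<lambda>t. indicator {0..T} t *\<^sub>R ((f t)\<^sup>2 + (g t)\<^sup>2))"
    using set_integral_add(1)[OF f2 g2] by (simp add: set_integrable_def)
  show ?thesis unfolding set_integrable_def
  proof (rule Bochner_Integration.integrable_bound[OF i1])
    show "(\<lambda>x. indicator {0..T} x *\<^sub>R (f x * g x)) \<in> borel_measurable lborel" by measurable
    have "\<bar>f x * g x\<bar> \<le> (f x)\<^sup>2 + (g x)\<^sup>2" for x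
    proof -
      have "0 \<le> (\<bar>f x\<bar> - \<bar>g x\<bar>)\<^sup>2" by simp
      moreover have "\<bar>f x\<bar> * \<bar>f x\<bar> = (f x)\<^sup>2" "\<bar>g x\<bar> * \<bar>g x\<bar> = (g x)\<^sup>2" by (simp_all add: power2_eq_square)
      ultimately have "2 * (\<bar>f x\<bar> * \<bar>g x\<bar>) \<le> (f x)\<^sup>2 + (g x)\<^sup>2" by (simp add: power2_eq_square algebra_simps)
      moreover have "0 \<le> \<bar>f x\<bar> * \<bar>g x\<bar>" by simp
      ultimately show ?thesis unfolding abs_mult by linarith
    qed
    then show "AE x in lborel. norm (indicator {0..T} x *\<^sub>R (f x * g x)) \<le> norm (indicator {0..T} x *\<^sub>R ((f x)\<^sup>2 + (g x)\<^sup>2))"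
      by (auto simp: indicator_def)
  qed
qed

lemma L2_lin:
  assumes "L2on T f" "L2on T g" shows "L2on T (\<lambda>t. a * f t + c * g t)"
proof -
  have fm[measurable]: "f \<in> borel_measurable borel" and f2: "set_integrable lborel {0..T} (\<lambda>t. (f t)\<^sup>2)"
    and gm[measurable]: "g \<in> borel_measurable borel" and g2: "set_integrable lborel {0..T} (\<lambda>t. (g t)\<^sup>2)"
    using assms by (auto simp: L2on_def)
  have i1: "integrable lborel (\<lambda>t. indicator {0..T} t *\<^sub>R ((2*a\<^sup>2) * (f t)\<^sup>2 + (2*c\<^sup>2) * (g t)\<^sup>2))"
    using set_integral_add(1)[OF set_integrable_mult_right[OF f2] set_integrable_mult_right[OF g2]]
    by (simp add: set_integrable_def)
  have "set_integrable lborel {0..T} (\<lambda>t. (a * f t + c * g t)\<^sup>2)" unfolding set_integrable_def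
  proof (rule Bochner_Integration.integrable_bound[OF i1])
    show "(\<lambda>x. indicator {0..T} x *\<^sub>R (a * f x + c * g x)\<^sup>2) \<in> borel_measurable lborel" by measurable
    have "(a * f x + c * g x)\<^sup>2 \<le> (2*a\<^sup>2) * (f x)\<^sup>2 + (2*c\<^sup>2) * (g x)\<^sup>2" for x
    proof -
      have "0 \<le> (a * f x - c * g x)\<^sup>2" by simp
      then show ?thesis by (simp add: power2_eq_square algebra_simps)
    qed
    then show "AE x in lborel. norm (indicator {0..T} x *\<^sub>R (a * f x + c * g x)\<^sup>2) \<le> norm (indicator {0..T} x *\<^sub>R ((2*a\<^sup>2) * (f x)\<^sup>2 + (2*c\<^sup>2) * (g x)\<^sup>2))"
      by (auto simp: indicator_def)
  qed
  then show ?thesis by (simp add: L2on_def)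
qed

lemma L2_zero: "L2on T (\<lambda>t. 0)"
  by (simp add: L2on_def set_integrable_def)

lemma L2_sum:
  assumes "finite A" "\<And>j. j \<in> A \<Longrightarrow> L2on T (f j)" shows "L2on T (\<lambda>t. \<Sum>j\<in>A. f j t)"
  using assms
proof (induction A rule: finite_induct)
  case empty then show ?case by (simp add: L2_zero)
next
  case (insert x F)
  have "L2on T (\<lambda>t. 1 * f x t + 1 * (\<Sum>j\<in>F. f j t))"
    by (rule L2_lin) (use insert in auto)
  then show ?case using insert by simp
qed

lemma cont_bounded:
  fixes h :: "real \<Rightarrow> real"
  assumes "continuous_on {0..T} h" obtains B where "B \<ge> 0" "\<And>t. t \<in> {0..T} \<Longrightarrow> \<bar>h t\<bar> \<le> B"
proof -
  have "compact (h ` {0..T})" by (rule compact_continuous_image[OF assms]) simp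
  then have "bounded (h ` {0..T})" by (rule compact_imp_bounded)
  then obtain B where "\<forall>x\<in>h ` {0..T}. norm x \<le> B" by (auto simp: bounded_iff)
  then have "\<And>t. t \<in> {0..T} \<Longrightarrow> \<bar>h t\<bar> \<le> max 0 B" by force
  then show ?thesis using that[of "max 0 B"] by simp
qed

lemma L1_cont:
  fixes h :: "real \<Rightarrow> real"
  assumes f: "set_integrable lborel {0..T} f" and fm: "f \<in> borel_measurable borel"
    and h: "continuous_on {0..T} h"
  shows "set_integrable lborel {0..T} (\<lambda>t. f t * h t)"
proof -
  obtain B where B: "B \<ge> 0" "\<And>t. t \<in> {0..T} \<Longrightarrow> \<bar>h t\<bar> \<le> B" using cont_bounded[OF h] by blast
  have hm: "(\<lambda>t. indicator {0..T} t *\<^sub>R h t) \<in> borel_measurable borel"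
    by (rule borel_measurable_continuous_on_indicator[OF _ h]) simp
  have i1: "integrable lborel (\<lambda>t. B * norm (indicator {0..T} t *\<^sub>R f t))"
    using f by (simp add: set_integrable_def)
  show ?thesis unfolding set_integrable_def
  proof (rule Bochner_Integration.integrable_bound[OF i1])
    have "(\<lambda>t. f t * (indicator {0..T} t *\<^sub>R h t)) \<in> borel_measurable lborel"
      using hm fm by measurable
    moreover have "(\<lambda>t. f t * (indicator {0..T} t *\<^sub>R h t)) = (\<lambda>x. indicator {0..T} x *\<^sub>R (f x * h x))"
      by (auto simp: indicator_def)
    ultimately show "(\<lambda>x. indicator {0..T} x *\<^sub>R (f x * h x)) \<in> borel_measurable lborel" by simp
    have pw: "\<bar>f x * h x\<bar> \<le> B * \<bar>f x\<bar>" if "x \<in> {0..T}" for x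
      using mult_left_mono[OF B(2)[OF that], of "\<bar>f x\<bar>"] by (simp add: abs_mult mult.commute)
    show "AE x in lborel. norm (indicator {0..T} x *\<^sub>R (f x * h x)) \<le> norm (B * norm (indicator {0..T} x *\<^sub>R f x))"
      using B(1) pw by (intro AE_I2) (auto simp: indicator_def)
  qed
qed

lemma L2_cont:
  assumes "L2on T f" "continuous_on {0..T} h"
  shows "set_integrable lborel {0..T} (\<lambda>t. f t * h t)"
  using L1_cont[OF L2_L1[OF assms(1)] _ assms(2)] assms(1) by (simp add: L2on_def)

lemma I_cont:
  assumes f: "set_integrable lborel {0..T} (f :: real \<Rightarrow> real)"
  shows "continuous_on {0..T} (\<lambda>t. LINT s:{0..t}|lborel. f s)"
proof -
  have eq: "(LINT s:{0..t}|lborel. f s) = integral {0..t} f" if "t \<in> {0..T}" for t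
    using set_borel_integral_eq_integral(2)[OF set_integrable_subset[OF f]] that by auto
  have "f integrable_on {0..T}" by (rule set_borel_integral_eq_integral(1)[OF f])
  then have "continuous_on {0..T} (\<lambda>t. integral {0..t} f)" by (rule indefinite_integral_continuous_1)
  then show ?thesis using eq continuous_on_cong by (metis (no_types, lifting))
qed

lemma I_lin:
  assumes f: "set_integrable lborel {0..T} (f :: real \<Rightarrow> real)" and g: "set_integrable lborel {0..T} g"
    and t: "t \<in> {0..T}"
  shows "(LINT s:{0..t}|lborel. a * f s + c * g s) = a * (LINT s:{0..t}|lborel. f s) + c * (LINT s:{0..t}|lborel. g s)"
proof -
  have f': "set_integrable lborel {0..t} f" and g': "set_integrable lborel {0..t} g"
    using set_integrable_subset[OF f, of "{0..t}"] set_integrable_subset[OF g, of "{0..t}"] t by auto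
  show ?thesis using set_integral_add(2)[OF set_integrable_mult_right[OF f'] set_integrable_mult_right[OF g']]
    by simp
qed

lemma I_sum:
  assumes "finite A" "\<And>j. j \<in> A \<Longrightarrow> set_integrable lborel {0..T} (f j :: real \<Rightarrow> real)"
    and t: "t \<in> {0..T}"
  shows "(LINT s:{0..t}|lborel. (\<Sum>j\<in>A. f j s)) = (\<Sum>j\<in>A. LINT s:{0..t}|lborel. f j s)"
proof -
  have "set_integrable lborel {0..t} (f j)" if "j \<in> A" for j
    using set_integrable_subset[OF assms(2)[OF that], of "{0..t}"] t by auto
  then show ?thesis unfolding set_lebesgue_integral_def set_integrable_def scaleR_sum_right
    by (rule Bochner_Integration.integral_sum)
qed

lemma fI_nonneg:
  assumes f: "set_integrable lborel {0..T} (f :: real \<Rightarrow> real)"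
  shows "(LINT t:{0..T}|lborel. f t * (LINT s:{0..t}|lborel. f s)) \<ge> 0"
proof -
  define g where "g t = indicator {0..T} t * f t" for t
  have g: "integrable lborel g" using f unfolding g_def[abs_def] set_integrable_def by simp
  have inner: "g t * (\<integral>s. g s * indicator {..t} s \<partial>lborel)
      = indicator {0..T} t *\<^sub>R (f t * (LINT s:{0..t}|lborel. f s))" for t
  proof (cases "t \<in> {0..T}")
    case True
    have "(\<integral>s. g s * indicator {..t} s \<partial>lborel) = (LINT s:{0..t}|lborel. f s)"
      unfolding set_lebesgue_integral_def g_def
      by (rule Bochner_Integration.integral_cong) (use True in \<open>auto simp: indicator_def\<close>)
    then show ?thesis using True by (simp add: g_def)
  next
    case False then show ?thesis by (simp add: g_def)
  qed
  have "(LINT t:{0..T}|lborel. f t * (LINT s:{0..t}|lborel. f s)) = (\<integral>t. g t * (\<integral>s. g s * indicator {..t} s \<partial>lborel) \<partial>lborel)"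
    unfolding set_lebesgue_integral_def[of _ "{0..T}"] inner ..
  then show ?thesis using fubini_tri[OF g] by simp
qed

lemma zero_I:
  assumes f: "L2on T f" and z: "(LINT t:{0..T}|lborel. (f t)\<^sup>2) = 0" and t: "t \<in> {0..T}"
  shows "(LINT s:{0..t}|lborel. f s) = 0"
proof -
  have fm[measurable]: "f \<in> borel_measurable borel" and f2: "set_integrable lborel {0..T} (\<lambda>t. (f t)\<^sup>2)"
    using f by (auto simp: L2on_def)
  have "AE x in lborel. indicator {0..T} x *\<^sub>R (f x)\<^sup>2 = 0"
    using integral_nonneg_eq_0_iff_AE[of lborel "\<lambda>x. indicator {0..T} x *\<^sub>R (f x)\<^sup>2"] f2 z
    by (auto simp: set_integrable_def set_lebesgue_integral_def)
  then have "AE x in lborel. indicator {0..t} x *\<^sub>R f x = 0"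
    by eventually_elim (use t in \<open>auto simp: indicator_def split: if_splits\<close>)
  then have "(\<integral>x. indicator {0..t} x *\<^sub>R f x \<partial>lborel) = 0"
    by (rule integral_eq_zero_AE)
  then show ?thesis by (simp add: set_lebesgue_integral_def)
qed



lemma L2M_comb:
  fixes a b :: "'a \<Rightarrow> real"
  assumes M: "prob_space M" and am[measurable]: "a \<in> borel_measurable M" and bm[measurable]: "b \<in> borel_measurable M"
    and a2: "integrable M (\<lambda>\<omega>. (a \<omega>)\<^sup>2)" and b2: "integrable M (\<lambda>\<omega>. (b \<omega>)\<^sup>2)"
  shows "integrable M (\<lambda>\<omega>. (c1 * a \<omega> + c2 * b \<omega> + c3)\<^sup>2)"
proof -
  interpret prob_space M by fact
  have i: "integrable M (\<lambda>\<omega>. (3*c1\<^sup>2) * (a \<omega>)\<^sup>2 + (3*c2\<^sup>2) * (b \<omega>)\<^sup>2 + 3*c3\<^sup>2)"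
    using a2 b2 by auto
  show ?thesis
  proof (rule Bochner_Integration.integrable_bound[OF i])
    show "(\<lambda>\<omega>. (c1 * a \<omega> + c2 * b \<omega> + c3)\<^sup>2) \<in> borel_measurable M" by measurable
    have "(c1 * a \<omega> + c2 * b \<omega> + c3)\<^sup>2 \<le> (3*c1\<^sup>2) * (a \<omega>)\<^sup>2 + (3*c2\<^sup>2) * (b \<omega>)\<^sup>2 + 3*c3\<^sup>2" for \<omega>
    proof -
      have "0 \<le> (c1 * a \<omega> - c2 * b \<omega>)\<^sup>2 + (c1 * a \<omega> - c3)\<^sup>2 + (c2 * b \<omega> - c3)\<^sup>2" by simp
      then show ?thesis by (simp add: power2_eq_square algebra_simps)
    qed
    moreover have "0 \<le> (3*c1\<^sup>2) * (a \<omega>)\<^sup>2 + (3*c2\<^sup>2) * (b \<omega>)\<^sup>2 + 3*c3\<^sup>2" for \<omega> by simp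
    ultimately show "AE \<omega> in M. norm ((c1 * a \<omega> + c2 * b \<omega> + c3)\<^sup>2) \<le> norm ((3*c1\<^sup>2) * (a \<omega>)\<^sup>2 + (3*c2\<^sup>2) * (b \<omega>)\<^sup>2 + 3*c3\<^sup>2)"
      by (intro AE_I2) simp
  qed
qed

lemma mv_concave:
  fixes a b :: "'a \<Rightarrow> real"
  assumes M: "prob_space M" and am[measurable]: "a \<in> borel_measurable M" and bm[measurable]: "b \<in> borel_measurable M"
    and a2: "integrable M (\<lambda>\<omega>. (a \<omega>)\<^sup>2)" and b2: "integrable M (\<lambda>\<omega>. (b \<omega>)\<^sup>2)"
    and p: "0 \<le> p" "p \<le> 1" and \<alpha>: "0 \<le> \<alpha>"
  shows "(prob_space.expectation M a - \<alpha> / 2 * prob_space.variance M a)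
       + (prob_space.expectation M b - \<alpha> / 2 * prob_space.variance M b)
     \<le> (prob_space.expectation M (\<lambda>\<omega>. p * a \<omega> + (1 - p) * b \<omega>) - \<alpha> / 2 * prob_space.variance M (\<lambda>\<omega>. p * a \<omega> + (1 - p) * b \<omega>))
       + (prob_space.expectation M (\<lambda>\<omega>. (1 - p) * a \<omega> + p * b \<omega>) - \<alpha> / 2 * prob_space.variance M (\<lambda>\<omega>. (1 - p) * a \<omega> + p * b \<omega>))"
proof -
  interpret prob_space M by fact
  define q where "q = 1 - p"
  have ai: "integrable M a" by (rule square_integrable_imp_integrable[OF am a2])
  have bi: "integrable M b" by (rule square_integrable_imp_integrable[OF bm b2])
  define ea where "ea = expectation a"
  define eb where "eb = expectation b"
  have E1: "expectation (\<lambda>\<omega>. p * a \<omega> + q * b \<omega>) = p * ea + q * eb"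
    using ai bi by (simp add: ea_def eb_def)
  have E2: "expectation (\<lambda>\<omega>. q * a \<omega> + p * b \<omega>) = q * ea + p * eb"
    using ai bi by (simp add: ea_def eb_def)
  have I: "integrable M (\<lambda>\<omega>. (c1 * a \<omega> + c2 * b \<omega> + c3)\<^sup>2)" for c1 c2 c3
    by (rule L2M_comb[OF M am bm a2 b2])
  have V1: "variance (\<lambda>\<omega>. p * a \<omega> + q * b \<omega>) = expectation (\<lambda>\<omega>. (p * a \<omega> + q * b \<omega> + (- p * ea - q * eb))\<^sup>2)"
    unfolding E1 by (simp add: algebra_simps)
  have V2: "variance (\<lambda>\<omega>. q * a \<omega> + p * b \<omega>) = expectation (\<lambda>\<omega>. (q * a \<omega> + p * b \<omega> + (- q * ea - p * eb))\<^sup>2)"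
    unfolding E2 by (simp add: algebra_simps)
  have Va: "variance a = expectation (\<lambda>\<omega>. (1 * a \<omega> + 0 * b \<omega> + (- ea))\<^sup>2)"
    by (simp add: ea_def)
  have Vb: "variance b = expectation (\<lambda>\<omega>. (0 * a \<omega> + 1 * b \<omega> + (- eb))\<^sup>2)"
    by (simp add: eb_def)
  have "variance (\<lambda>\<omega>. p * a \<omega> + q * b \<omega>) + variance (\<lambda>\<omega>. q * a \<omega> + p * b \<omega>)
      = expectation (\<lambda>\<omega>. (p * a \<omega> + q * b \<omega> + (- p * ea - q * eb))\<^sup>2 + (q * a \<omega> + p * b \<omega> + (- q * ea - p * eb))\<^sup>2)"
    unfolding V1 V2 by (rule Bochner_Integration.integral_add[symmetric, OF I I])
  also have "\<dots> \<le> expectation (\<lambda>\<omega>. (1 * a \<omega> + 0 * b \<omega> + (- ea))\<^sup>2 + (0 * a \<omega> + 1 * b \<omega> + (- eb))\<^sup>2)"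
  proof (rule integral_mono[OF Bochner_Integration.integrable_add[OF I I] Bochner_Integration.integrable_add[OF I I]])
    fix \<omega>
    define x where "x = a \<omega> - ea"
    define y where "y = b \<omega> - eb"
    have pq: "0 \<le> p * q" using p by (simp add: q_def)
    have "0 \<le> 2 * (p * q) * (x - y)\<^sup>2" using pq by simp
    moreover have "x\<^sup>2 + y\<^sup>2 - ((p * x + q * y)\<^sup>2 + (q * x + p * y)\<^sup>2) = 2 * (p * q) * (x - y)\<^sup>2"
      unfolding q_def power2_eq_square by algebra
    ultimately have key: "(p * x + q * y)\<^sup>2 + (q * x + p * y)\<^sup>2 \<le> x\<^sup>2 + y\<^sup>2" by linarith
    have e1: "(p * a \<omega> + q * b \<omega> + (- p * ea - q * eb)) = p * x + q * y" by (simp add: x_def y_def algebra_simps)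
    have e2: "(q * a \<omega> + p * b \<omega> + (- q * ea - p * eb)) = q * x + p * y" by (simp add: x_def y_def algebra_simps)
    have e3: "(1 * a \<omega> + 0 * b \<omega> + (- ea)) = x" "(0 * a \<omega> + 1 * b \<omega> + (- eb)) = y" by (simp_all add: x_def y_def)
    show "(p * a \<omega> + q * b \<omega> + (- p * ea - q * eb))\<^sup>2 + (q * a \<omega> + p * b \<omega> + (- q * ea - p * eb))\<^sup>2
        \<le> (1 * a \<omega> + 0 * b \<omega> + (- ea))\<^sup>2 + (0 * a \<omega> + 1 * b \<omega> + (- eb))\<^sup>2"
      unfolding e1 e2 e3 by (rule key)
  qed
  also have "\<dots> = variance a + variance b"
    unfolding Va Vb by (rule Bochner_Integration.integral_add[OF I I])
  finally have V: "variance (\<lambda>\<omega>. p * a \<omega> + q * b \<omega>) + variance (\<lambda>\<omega>. q * a \<omega> + p * b \<omega>) \<le> variance a + variance b" .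
  have "\<alpha> / 2 * (variance (\<lambda>\<omega>. p * a \<omega> + q * b \<omega>) + variance (\<lambda>\<omega>. q * a \<omega> + p * b \<omega>)) \<le> \<alpha> / 2 * (variance a + variance b)"
    using V \<alpha> by (intro mult_left_mono) auto
  then show ?thesis unfolding q_def[symmetric] E1 E2 ea_def[symmetric] eb_def[symmetric]
    by (simp add: q_def algebra_simps)
qed


lemma mv_eq:
  fixes N R :: "'a \<Rightarrow> real"
  assumes M: "prob_space M" and Ni: "integrable M N" and R: "\<And>\<omega>. \<omega> \<in> space M \<Longrightarrow> R \<omega> = N \<omega> + c"
  shows "prob_space.expectation M R - \<alpha> / 2 * prob_space.variance M R
       = (prob_space.expectation M N - \<alpha> / 2 * prob_space.variance M N) + c"
proof -
  interpret prob_space M by fact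
  have E: "expectation R = expectation N + c"
  proof -
    have "expectation R = expectation (\<lambda>\<omega>. N \<omega> + c)"
      using R by (intro Bochner_Integration.integral_cong) auto
    also have "\<dots> = expectation N + c" using Ni by (simp add: prob_space)
    finally show ?thesis .
  qed
  have V: "variance R = variance N"
    unfolding E using R by (intro Bochner_Integration.integral_cong) auto
  show ?thesis by (simp only: V) (simp add: E)
qed

lemma bm_facts:
  assumes "std_brownian_motion M W"
  shows "prob_space M" "\<And>t. t \<ge> 0 \<Longrightarrow> W t \<in> borel_measurable M"
    "\<And>\<omega>. \<omega> \<in> space M \<Longrightarrow> W 0 \<omega> = 0" "\<And>\<omega>. \<omega> \<in> space M \<Longrightarrow> continuous_on {0..} (\<lambda>t. W t \<omega>)"
  using assms unfolding std_brownian_motion_def by auto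

lemma bm_dist:
  assumes "std_brownian_motion M W" "0 < t"
  shows "distributed M lborel (\<lambda>\<omega>. W t \<omega> - W 0 \<omega>) (normal_density 0 (sqrt t))"
proof -
  have "distributed M lborel (\<lambda>\<omega>. W t \<omega> - W 0 \<omega>) (normal_density 0 (sqrt (t - 0)))"
    using assms unfolding std_brownian_motion_def by blast
  then show ?thesis by simp
qed

lemma W_sq:
  assumes bm: "std_brownian_motion M W" and t: "t \<ge> 0"
  shows "(\<integral>\<^sup>+\<omega>. ennreal ((W t \<omega>)\<^sup>2) \<partial>M) = ennreal t"
proof (cases "t = 0")
  case True
  then show ?thesis using bm_facts(3)[OF bm] by (simp add: nn_integral_cong[of M _ "\<lambda>_. 0"])
next
  case False
  then have tp: "0 < t" using t by simp
  have d: "distributed M lborel (\<lambda>\<omega>. W t \<omega> - W 0 \<omega>) (normal_density 0 (sqrt t))"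
    by (rule bm_dist[OF bm tp])
  have "(\<integral>\<^sup>+x. ennreal (normal_density 0 (sqrt t) x) * ennreal (x\<^sup>2) \<partial>lborel)
      = (\<integral>\<^sup>+\<omega>. ennreal ((W t \<omega> - W 0 \<omega>)\<^sup>2) \<partial>M)"
    by (rule distributed_nn_integral[OF d]) simp
  also have "\<dots> = (\<integral>\<^sup>+\<omega>. ennreal ((W t \<omega>)\<^sup>2) \<partial>M)"
    using bm_facts(3)[OF bm] by (intro nn_integral_cong) simp
  finally have eq: "(\<integral>\<^sup>+\<omega>. ennreal ((W t \<omega>)\<^sup>2) \<partial>M) = (\<integral>\<^sup>+x. ennreal (normal_density 0 (sqrt t) x * x\<^sup>2) \<partial>lborel)"
    by (simp add: ennreal_mult'')
  have hb: "has_bochner_integral lborel (\<lambda>x. normal_density 0 (sqrt t) x * (x - 0) ^ (2 * 1))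
      (fact (2 * 1) / ((2 / (sqrt t)\<^sup>2)^1 * fact 1))"
    by (rule normal_moment_even) (use tp in simp)
  have val: "fact (2 * 1) / ((2 / (sqrt t)\<^sup>2)^1 * fact 1) = t" using tp by simp
  have hb': "has_bochner_integral lborel (\<lambda>x. normal_density 0 (sqrt t) x * x\<^sup>2) t"
    using hb unfolding val by simp
  have "(\<integral>\<^sup>+x. ennreal (normal_density 0 (sqrt t) x * x\<^sup>2) \<partial>lborel) = ennreal t"
    using hb' by (subst nn_integral_eq_integral) (auto simp: has_bochner_integral_iff)
  then show ?thesis using eq by simp
qed



lemma floor_div_tendsto:
  fixes t :: real assumes "t \<ge> 0"
  shows "(\<lambda>n. max 0 (real_of_int \<lfloor>real (Suc n) * t\<rfloor> / real (Suc n))) \<longlonglongrightarrow> t"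
proof -
  define c where "c n = real (Suc n)" for n
  have cpos: "c n > 0" for n by (simp add: c_def)
  have fl: "real_of_int \<lfloor>c n * t\<rfloor> \<le> c n * t \<and> c n * t < real_of_int \<lfloor>c n * t\<rfloor> + 1" for n
    using floor_correct[of "c n * t"] by simp
  have lo: "t - 1 / c n \<le> real_of_int \<lfloor>c n * t\<rfloor> / c n" for n
  proof -
    have "t - 1 / c n = (c n * t - 1) / c n" using cpos[of n] by (simp add: field_simps)
    also have "\<dots> \<le> real_of_int \<lfloor>c n * t\<rfloor> / c n"
      using fl[of n] cpos[of n] by (intro divide_right_mono) auto
    finally show ?thesis .
  qed
  have hi: "real_of_int \<lfloor>c n * t\<rfloor> / c n \<le> t" for n
    using fl[of n] cpos[of n] by (simp add: pos_divide_le_eq mult.commute)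
  have "(\<lambda>n. t - 1 / c n) \<longlonglongrightarrow> t - 0"
    unfolding c_def using tendsto_diff[OF tendsto_const LIMSEQ_inverse_real_of_nat, of t]
    by (simp add: inverse_eq_divide)
  then have lim1: "(\<lambda>n. t - 1 / c n) \<longlonglongrightarrow> t" by simp
  have "(\<lambda>n. real_of_int \<lfloor>c n * t\<rfloor> / c n) \<longlonglongrightarrow> t"
    by (rule real_tendsto_sandwich[OF always_eventually always_eventually lim1 tendsto_const])
       (use lo hi in auto)
  then have "(\<lambda>n. max 0 (real_of_int \<lfloor>c n * t\<rfloor> / c n)) \<longlonglongrightarrow> max 0 t"
    by (intro tendsto_max tendsto_const)
  then show ?thesis using assms by (simp add: c_def)
qed

lemma caratheodory_measurable:
  fixes F :: "real \<Rightarrow> 'a \<Rightarrow> real"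
  assumes meas: "\<And>s. s \<ge> 0 \<Longrightarrow> F s \<in> borel_measurable M"
    and cont: "\<And>\<omega>. \<omega> \<in> space M \<Longrightarrow> continuous_on {0..T} (\<lambda>t. F t \<omega>)"
  shows "(\<lambda>(\<omega>,t). indicator {0..T} t * F t \<omega>) \<in> borel_measurable (M \<Otimes>\<^sub>M lborel)"
proof -
  define s where "s n t = max 0 (real_of_int \<lfloor>real (Suc n) * t\<rfloor> / real (Suc n))" for n t
  show ?thesis
  proof (rule borel_measurable_LIMSEQ_real[where u="\<lambda>n x. indicator {0..T} (snd x) * F (s n (snd x)) (fst x)"])
  show "(\<lambda>n. indicator {0..T} (snd x) * F (s n (snd x)) (fst x)) \<longlonglongrightarrow> (case x of (\<omega>,t) \<Rightarrow> indicator {0..T} t * F t \<omega>)"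
    if x: "x \<in> space (M \<Otimes>\<^sub>M lborel)" for x
  proof (cases x)
    case (Pair \<omega> t)
    have \<omega>: "\<omega> \<in> space M" using x Pair by (simp add: space_pair_measure)
    show ?thesis
    proof (cases "t \<in> {0..T}")
      case True
      have sin: "s n t \<in> {0..T}" for n
      proof -
        have "real_of_int \<lfloor>real (Suc n) * t\<rfloor> / real (Suc n) \<le> t"
          by (simp add: field_simps del: of_nat_Suc)
        then show ?thesis using True by (auto simp: s_def)
      qed
      have "(\<lambda>n. F (s n t) \<omega>) \<longlonglongrightarrow> F t \<omega>"
        using continuous_on_tendsto_compose[OF cont[OF \<omega>] floor_div_tendsto[of t], unfolded s_def[symmetric]] True sin
        by (auto simp: s_def)
      then show ?thesis using True Pair by (simp add: tendsto_mult_left)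
    next
      case False
      then show ?thesis using Pair by simp
    qed
  qed
  show "(\<lambda>x. indicator {0..T} (snd x) * F (s n (snd x)) (fst x)) \<in> borel_measurable (M \<Otimes>\<^sub>M lborel)" for n
  proof -
    have fk: "(\<lambda>x. indicator {0..T} (snd x) * F (max 0 (real_of_int k / real (Suc n))) (fst x)) \<in> borel_measurable (M \<Otimes>\<^sub>M lborel)" for k :: int
    proof -
      have "F (max 0 (real_of_int k / real (Suc n))) \<in> borel_measurable M" by (rule meas) simp
      then have "(\<lambda>x. F (max 0 (real_of_int k / real (Suc n))) (fst x)) \<in> borel_measurable (M \<Otimes>\<^sub>M lborel)"
        by measurable
      then show ?thesis by measurable
    qed
    have "(\<lambda>x. real (Suc n) * snd x) \<in> borel_measurable (M \<Otimes>\<^sub>M lborel)" by measurable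
    then have g: "(\<lambda>x. \<lfloor>real (Suc n) * snd x\<rfloor>) \<in> measurable (M \<Otimes>\<^sub>M lborel) (count_space UNIV)"
      by (rule measurable_compose[OF _ measurable_real_floor])
    have "(\<lambda>x. (\<lambda>k x. indicator {0..T} (snd x) * F (max 0 (real_of_int k / real (Suc n))) (fst x))
            (\<lfloor>real (Suc n) * snd x\<rfloor>) x) \<in> borel_measurable (M \<Otimes>\<^sub>M lborel)"
      by (rule measurable_compose_countable'[where I=UNIV and g="\<lambda>x. \<lfloor>real (Suc n) * snd x\<rfloor>"
            and f="\<lambda>k x. indicator {0..T} (snd x) * F (max 0 (real_of_int k / real (Suc n))) (fst x)", OF fk g]) simp
    then show ?thesis by (simp add: s_def)
  qed
  qed
qed



lemma P_cont:
  assumes bm: "std_brownian_motion M W" and b: "continuous_on {0..T} b" and \<omega>: "\<omega> \<in> space M"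
  shows "continuous_on {0..T} (\<lambda>t. unaffected_price S0 \<sigma> b W t \<omega>)"
proof -
  have "continuous_on {0..T} (\<lambda>t. LINT s:{0..t}|lborel. b s)"
    by (rule I_cont[OF borel_integrable_atLeastAtMost'[OF b]])
  moreover have "continuous_on {0..T} (\<lambda>t. W t \<omega>)"
    by (rule continuous_on_subset[OF bm_facts(4)[OF bm \<omega>]]) auto
  ultimately show ?thesis unfolding unaffected_price_def by (intro continuous_intros)
qed

lemma P_meas:
  assumes bm: "std_brownian_motion M W" and t: "t \<ge> 0"
  shows "unaffected_price S0 \<sigma> b W t \<in> borel_measurable M"
proof -
  have [measurable]: "W t \<in> borel_measurable M" by (rule bm_facts(2)[OF bm t])
  show ?thesis unfolding unaffected_price_def[abs_def] by measurable
qed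

lemma P_joint:
  assumes bm: "std_brownian_motion M W" and b: "continuous_on {0..T} b"
  shows "(\<lambda>(\<omega>,t). indicator {0..T} t * unaffected_price S0 \<sigma> b W t \<omega>) \<in> borel_measurable (M \<Otimes>\<^sub>M lborel)"
  by (rule caratheodory_measurable[OF P_meas[OF bm] P_cont[OF bm b]])

lemma P_sq_bound:
  assumes bm: "std_brownian_motion M W" and b: "continuous_on {0..T} b"
  obtains K where "\<And>t. t \<in> {0..T} \<Longrightarrow> (\<integral>\<^sup>+\<omega>. ennreal ((unaffected_price S0 \<sigma> b W t \<omega>)\<^sup>2) \<partial>M) \<le> ennreal K"
proof -
  interpret prob_space M by (rule bm_facts(1)[OF bm])
  have "continuous_on {0..T} (\<lambda>t. LINT s:{0..t}|lborel. b s)"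
    by (rule I_cont[OF borel_integrable_atLeastAtMost'[OF b]])
  then obtain Bm where Bm: "\<And>t. t \<in> {0..T} \<Longrightarrow> \<bar>LINT s:{0..t}|lborel. b s\<bar> \<le> Bm" "Bm \<ge> 0"
    using cont_bounded by metis
  define K where "K = 3 * S0\<^sup>2 + 3 * Bm\<^sup>2 + 3 * \<sigma>\<^sup>2 * T"
  have "(\<integral>\<^sup>+\<omega>. ennreal ((unaffected_price S0 \<sigma> b W t \<omega>)\<^sup>2) \<partial>M) \<le> ennreal K" if t: "t \<in> {0..T}" for t
  proof -
    have Wm[measurable]: "W t \<in> borel_measurable M" using t by (intro bm_facts(2)[OF bm]) auto
    have pw: "(unaffected_price S0 \<sigma> b W t \<omega>)\<^sup>2 \<le> (3 * S0\<^sup>2 + 3 * Bm\<^sup>2) + 3 * \<sigma>\<^sup>2 * (W t \<omega>)\<^sup>2" for \<omega>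
    proof -
      define B where "B = (LINT s:{0..t}|lborel. b s)"
      have "B\<^sup>2 \<le> Bm\<^sup>2" using Bm t unfolding B_def by (simp add: abs_le_square_iff[symmetric])
      moreover have "0 \<le> (S0 - \<sigma> * W t \<omega>)\<^sup>2 + (S0 - B)\<^sup>2 + (\<sigma> * W t \<omega> - B)\<^sup>2" by simp
      ultimately show ?thesis unfolding unaffected_price_def B_def[symmetric]
        by (simp add: power2_eq_square algebra_simps)
    qed
    have "(\<integral>\<^sup>+\<omega>. ennreal ((unaffected_price S0 \<sigma> b W t \<omega>)\<^sup>2) \<partial>M)
        \<le> (\<integral>\<^sup>+\<omega>. ennreal (3 * S0\<^sup>2 + 3 * Bm\<^sup>2) + ennreal (3 * \<sigma>\<^sup>2) * ennreal ((W t \<omega>)\<^sup>2) \<partial>M)"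
      by (intro nn_integral_mono) (use pw in \<open>auto simp: ennreal_plus[symmetric] ennreal_mult[symmetric] simp del: ennreal_plus\<close>)
    also have "\<dots> = ennreal (3 * S0\<^sup>2 + 3 * Bm\<^sup>2) + ennreal (3 * \<sigma>\<^sup>2) * ennreal t"
      using t by (subst nn_integral_add) (auto simp: nn_integral_cmult W_sq[OF bm] emeasure_space_1)
    also have "\<dots> \<le> ennreal K"
    proof -
      have "3 * \<sigma>\<^sup>2 * t \<le> 3 * \<sigma>\<^sup>2 * T" using t by (intro mult_left_mono) auto
      moreover have "ennreal (3 * S0\<^sup>2 + 3 * Bm\<^sup>2) + ennreal (3 * \<sigma>\<^sup>2) * ennreal t = ennreal (3 * S0\<^sup>2 + 3 * Bm\<^sup>2 + 3 * \<sigma>\<^sup>2 * t)"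
        using t by (simp add: ennreal_mult[symmetric] ennreal_plus[symmetric] del: ennreal_plus)
      ultimately show ?thesis unfolding K_def by (simp add: ennreal_leI)
    qed
    finally show ?thesis .
  qed
  then show ?thesis using that by blast
qed


lemma P_fubini_fin:
  assumes bm: "std_brownian_motion M W" and b: "continuous_on {0..T} b" and T: "T \<ge> 0"
  shows "(\<integral>\<^sup>+\<omega>. \<integral>\<^sup>+t. ennreal ((indicator {0..T} t * unaffected_price S0 \<sigma> b W t \<omega>)\<^sup>2) \<partial>lborel \<partial>M) < \<infinity>"
proof -
  interpret prob_space M by (rule bm_facts(1)[OF bm])
  interpret PS: pair_sigma_finite M lborel
    by (intro pair_sigma_finite.intro prob_space_imp_sigma_finite sigma_finite_lborel) (rule bm_facts(1)[OF bm])
  obtain K where K: "\<And>t. t \<in> {0..T} \<Longrightarrow> (\<integral>\<^sup>+\<omega>. ennreal ((unaffected_price S0 \<sigma> b W t \<omega>)\<^sup>2) \<partial>M) \<le> ennreal K"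
    using P_sq_bound[OF bm b] by blast
  have jm: "(\<lambda>(\<omega>,t). indicator {0..T} t * unaffected_price S0 \<sigma> b W t \<omega>) \<in> borel_measurable (M \<Otimes>\<^sub>M lborel)"
    by (rule P_joint[OF bm b])
  have m: "case_prod (\<lambda>\<omega> t. ennreal ((indicator {0..T} t * unaffected_price S0 \<sigma> b W t \<omega>)\<^sup>2)) \<in> borel_measurable (M \<Otimes>\<^sub>M lborel)"
    using jm by measurable
  have "(\<integral>\<^sup>+\<omega>. \<integral>\<^sup>+t. ennreal ((indicator {0..T} t * unaffected_price S0 \<sigma> b W t \<omega>)\<^sup>2) \<partial>lborel \<partial>M)
      = (\<integral>\<^sup>+t. \<integral>\<^sup>+\<omega>. ennreal ((indicator {0..T} t * unaffected_price S0 \<sigma> b W t \<omega>)\<^sup>2) \<partial>M \<partial>lborel)"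
    by (rule PS.Fubini'[OF m, symmetric])
  also have "\<dots> \<le> (\<integral>\<^sup>+t. ennreal K * indicator {0..T} t \<partial>lborel)"
  proof (rule nn_integral_mono)
    fix t show "(\<integral>\<^sup>+\<omega>. ennreal ((indicator {0..T} t * unaffected_price S0 \<sigma> b W t \<omega>)\<^sup>2) \<partial>M) \<le> ennreal K * indicator {0..T} t"
      using K[of t] by (cases "t \<in> {0..T}") auto
  qed
  also have "\<dots> = ennreal K * ennreal T" using T by (simp add: nn_integral_cmult_indicator)
  also have "\<dots> < \<infinity>" by (simp add: ennreal_mult_less_top)
  finally show ?thesis .
qed

lemma N_L2:
  assumes bm: "std_brownian_motion M W" and b: "continuous_on {0..T} b" and T: "T \<ge> 0"
    and f: "L2on T f"
  shows "(\<lambda>\<omega>. LINT t:{0..T}|lborel. f t * unaffected_price S0 \<sigma> b W t \<omega>) \<in> borel_measurable M"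
    "integrable M (\<lambda>\<omega>. (LINT t:{0..T}|lborel. f t * unaffected_price S0 \<sigma> b W t \<omega>)\<^sup>2)"
proof -
  interpret prob_space M by (rule bm_facts(1)[OF bm])
  define P where "P t \<omega> = unaffected_price S0 \<sigma> b W t \<omega>" for t \<omega>
  define N where "N \<omega> = (LINT t:{0..T}|lborel. f t * P t \<omega>)" for \<omega>
  have fm[measurable]: "f \<in> borel_measurable borel" and f2: "set_integrable lborel {0..T} (\<lambda>t. (f t)\<^sup>2)"
    using f by (auto simp: L2on_def)
  have jm[measurable]: "(\<lambda>(\<omega>,t). indicator {0..T} t * P t \<omega>) \<in> borel_measurable (M \<Otimes>\<^sub>M lborel)"
    unfolding P_def by (rule P_joint[OF bm b])
  have jm2: "(\<lambda>(\<omega>,t). f t * (indicator {0..T} t * P t \<omega>)) \<in> borel_measurable (M \<Otimes>\<^sub>M lborel)"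
  proof -
    have "(\<lambda>x. f (snd x) * (case x of (\<omega>,t) \<Rightarrow> indicator {0..T} t * P t \<omega>)) \<in> borel_measurable (M \<Otimes>\<^sub>M lborel)"
      using jm by measurable
    then show ?thesis by (simp add: case_prod_beta)
  qed
  have Neq: "N \<omega> = (\<integral>t. f t * (indicator {0..T} t * P t \<omega>) \<partial>lborel)" for \<omega>
    unfolding N_def set_lebesgue_integral_def by (intro Bochner_Integration.integral_cong) auto
  have Nm: "N \<in> borel_measurable M"
  proof -
    have "(\<lambda>\<omega>. \<integral>t. f t * (indicator {0..T} t * P t \<omega>) \<partial>lborel) \<in> borel_measurable M"
      using jm2 by (rule lborel.borel_measurable_lebesgue_integral)
    moreover have "N = (\<lambda>\<omega>. \<integral>t. f t * (indicator {0..T} t * P t \<omega>) \<partial>lborel)"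
      by (rule ext) (rule Neq)
    ultimately show ?thesis by simp
  qed
  then show "(\<lambda>\<omega>. LINT t:{0..T}|lborel. f t * unaffected_price S0 \<sigma> b W t \<omega>) \<in> borel_measurable M"
    unfolding N_def P_def .
  define C where "C = (\<integral>\<^sup>+t. ennreal ((indicator {0..T} t * f t)\<^sup>2) \<partial>lborel)"
  have C: "C < \<infinity>"
  proof -
    have "integrable lborel (\<lambda>t. indicator {0..T} t *\<^sub>R (f t)\<^sup>2)" using f2 by (simp add: set_integrable_def)
    then have "(\<integral>\<^sup>+t. ennreal (norm (indicator {0..T} t *\<^sub>R (f t)\<^sup>2)) \<partial>lborel) < \<infinity>"
      by (simp add: integrable_iff_bounded)
    moreover have "(\<lambda>t. ennreal (norm (indicator {0..T} t *\<^sub>R (f t)\<^sup>2))) = (\<lambda>t. ennreal ((indicator {0..T} t * f t)\<^sup>2))"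
      by (auto simp: indicator_def)
    ultimately show ?thesis by (simp add: C_def)
  qed
  define G where "G \<omega> = (\<integral>\<^sup>+t. ennreal ((indicator {0..T} t * P t \<omega>)\<^sup>2) \<partial>lborel)" for \<omega>
  have G: "(\<integral>\<^sup>+\<omega>. G \<omega> \<partial>M) < \<infinity>" unfolding G_def P_def by (rule P_fubini_fin[OF bm b T])
  have pw: "ennreal ((N \<omega>)\<^sup>2) \<le> C * G \<omega>" if \<omega>: "\<omega> \<in> space M" for \<omega>
  proof -
    define F1 where "F1 t = ennreal \<bar>indicator {0..T} t * f t\<bar>" for t
    define F2 where "F2 t = ennreal \<bar>indicator {0..T} t * P t \<omega>\<bar>" for t
    have F1m: "F1 \<in> borel_measurable lborel" unfolding F1_def by measurable
    have F2m: "F2 \<in> borel_measurable lborel"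
    proof -
      have "(\<lambda>t. (\<lambda>(\<omega>,t). indicator {0..T} t * P t \<omega>) (\<omega>, t)) \<in> borel_measurable lborel"
        by (rule measurable_Pair2[OF jm \<omega>])
      moreover define h where "h = (\<lambda>t. indicator {0..T} t * P t \<omega>)"
      ultimately have hm[measurable]: "h \<in> borel_measurable lborel" by simp
      have "(\<lambda>t. ennreal \<bar>h t\<bar>) \<in> borel_measurable lborel" by measurable
      then show ?thesis unfolding F2_def h_def by simp
    qed
    have "ennreal \<bar>N \<omega>\<bar> \<le> (\<integral>\<^sup>+t. ennreal (norm (f t * (indicator {0..T} t * P t \<omega>))) \<partial>lborel)"
    proof (cases "integrable lborel (\<lambda>t. f t * (indicator {0..T} t * P t \<omega>))")
      case True
      then show ?thesis unfolding Neq using integral_norm_bound_ennreal[OF True] by simp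
    next
      case False
      then show ?thesis unfolding Neq by (simp add: not_integrable_integral_eq)
    qed
    also have "\<dots> = (\<integral>\<^sup>+t. F1 t * F2 t \<partial>lborel)"
      by (intro nn_integral_cong) (auto simp: F1_def F2_def ennreal_mult[symmetric] abs_mult indicator_def)
    finally have h1: "ennreal \<bar>N \<omega>\<bar> \<le> (\<integral>\<^sup>+t. F1 t * F2 t \<partial>lborel)" .
    have "ennreal ((N \<omega>)\<^sup>2) = (ennreal \<bar>N \<omega>\<bar>)\<^sup>2" by (simp add: ennreal_power)
    also have "\<dots> \<le> (\<integral>\<^sup>+t. F1 t * F2 t \<partial>lborel)\<^sup>2" using h1 by (intro power_mono) auto
    also have "\<dots> \<le> (\<integral>\<^sup>+t. F1 t ^ 2 \<partial>lborel) * (\<integral>\<^sup>+t. F2 t ^ 2 \<partial>lborel)"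
      by (rule Cauchy_Schwarz_nn_integral[OF F1m F2m])
    also have "(\<integral>\<^sup>+t. F1 t ^ 2 \<partial>lborel) = C"
      unfolding C_def F1_def by (intro nn_integral_cong) (simp add: ennreal_power)
    also have "(\<integral>\<^sup>+t. F2 t ^ 2 \<partial>lborel) = G \<omega>"
      unfolding G_def F2_def by (intro nn_integral_cong) (simp add: ennreal_power)
    finally show ?thesis .
  qed
  have "(\<integral>\<^sup>+\<omega>. ennreal (norm ((N \<omega>)\<^sup>2)) \<partial>M) \<le> (\<integral>\<^sup>+\<omega>. C * G \<omega> \<partial>M)"
    by (intro nn_integral_mono) (use pw in simp)
  also have "\<dots> = C * (\<integral>\<^sup>+\<omega>. G \<omega> \<partial>M)"
  proof (rule nn_integral_cmult)
    have "(\<lambda>(\<omega>,t). ennreal ((indicator {0..T} t * P t \<omega>)\<^sup>2)) \<in> borel_measurable (M \<Otimes>\<^sub>M lborel)"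
      using jm by measurable
    then have "(\<lambda>\<omega>. \<integral>\<^sup>+t. (\<lambda>(\<omega>,t). ennreal ((indicator {0..T} t * P t \<omega>)\<^sup>2)) (\<omega>, t) \<partial>lborel) \<in> borel_measurable M"
      by (rule lborel.borel_measurable_nn_integral_fst)
    then show "G \<in> borel_measurable M" unfolding G_def by simp
  qed
  also have "\<dots> < \<infinity>" using C G by (simp add: ennreal_mult_less_top)
  finally have "(\<integral>\<^sup>+\<omega>. ennreal (norm ((N \<omega>)\<^sup>2)) \<partial>M) < \<infinity>" .
  then have "integrable M (\<lambda>\<omega>. (N \<omega>)\<^sup>2)"
    by (intro integrableI_bounded) (use Nm in measurable)
  then show "integrable M (\<lambda>\<omega>. (LINT t:{0..T}|lborel. f t * unaffected_price S0 \<sigma> b W t \<omega>)\<^sup>2)"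
    unfolding N_def P_def .
qed



lemma I_zero: "(LINT s:{0..0}|lborel. (f::real\<Rightarrow>real) s) = 0"
proof -
  have "AE s in lborel. indicator {0..0} s *\<^sub>R f s = 0"
    by (rule eventually_mono[OF AE_lborel_singleton[of 0]]) (auto simp: indicator_def)
  then show ?thesis unfolding set_lebesgue_integral_def by (rule integral_eq_zero_AE)
qed

lemma adm_L2: "admissible x T X v \<Longrightarrow> L2on T v"
  by (simp add: admissible_def L2on_def)

lemma adm_X0: "admissible x T X v \<Longrightarrow> T \<ge> 0 \<Longrightarrow> X 0 = x"
  unfolding admissible_def using I_zero[of v] by auto

lemma adm_diff: "admissible x T X v \<Longrightarrow> t \<in> {0..T} \<Longrightarrow> X t - X 0 = (LINT s:{0..t}|lborel. v s)"
  using adm_X0[of x T X v] unfolding admissible_def by auto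

lemma adm_cont:
  assumes "admissible x T X v" shows "continuous_on {0..T} X"
proof -
  have "continuous_on {0..T} (\<lambda>t. x + (LINT s:{0..t}|lborel. v s))"
    using I_cont[OF L2_L1[OF adm_L2[OF assms]]] by (intro continuous_intros)
  moreover have "\<And>t. t \<in> {0..T} \<Longrightarrow> x + (LINT s:{0..t}|lborel. v s) = X t"
    using assms unfolding admissible_def by auto
  ultimately show ?thesis using continuous_on_cong by (metis (no_types, lifting))
qed

lemma adm_comb:
  assumes a1: "admissible x T X1 v1" and a2: "admissible x T X2 v2"
  shows "admissible x T (\<lambda>t. p * X1 t + (1 - p) * X2 t) (\<lambda>t. p * v1 t + (1 - p) * v2 t)"
proof -
  have L: "L2on T (\<lambda>t. p * v1 t + (1 - p) * v2 t)" by (rule L2_lin[OF adm_L2[OF a1] adm_L2[OF a2]])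
  have "p * X1 t + (1 - p) * X2 t = x + (LINT s:{0..t}|lborel. p * v1 s + (1 - p) * v2 s)" if t: "t \<in> {0..T}" for t
  proof -
    have "(LINT s:{0..t}|lborel. p * v1 s + (1 - p) * v2 s) = p * (LINT s:{0..t}|lborel. v1 s) + (1 - p) * (LINT s:{0..t}|lborel. v2 s)"
      by (rule I_lin[OF L2_L1[OF adm_L2[OF a1]] L2_L1[OF adm_L2[OF a2]] t])
    moreover have "X1 t = x + (LINT s:{0..t}|lborel. v1 s)" "X2 t = x + (LINT s:{0..t}|lborel. v2 s)"
      using a1 a2 t unfolding admissible_def by auto
    ultimately show ?thesis by (simp add: algebra_simps)
  qed
  moreover have "p * X1 T + (1 - p) * X2 T = 0" using a1 a2 unfolding admissible_def by simp
  ultimately show ?thesis using L unfolding admissible_def L2on_def by auto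
qed

lemma k_int:
  assumes w: "L2on T w" and c: "continuous_on {0..T} c" and u: "L2on T u"
  shows "set_integrable lborel {0..T} (\<lambda>t. w t * (g * c t + l * u t))"
proof -
  have "set_integrable lborel {0..T} (\<lambda>t. g * (w t * c t) + l * (w t * u t))"
    by (intro set_integral_add(1) set_integrable_mult_right L2_cont[OF w c] L2_mult[OF w u])
  then show ?thesis by (simp add: algebra_simps)
qed

lemma key_identity:
  fixes a a' A A' SA SA' Sv Sv' g l :: real
  defines "k \<equiv> \<lambda>a A C V. a * (g * (A + C) + l * (a + V))"
  shows "k a A (SA - A) (Sv - a)
       - k (3/4 * a + (1 - 3/4) * a') (3/4 * A + (1 - 3/4) * A') (SA - A) (Sv - a)
       + k a' A' (SA' - A') (Sv' - a')
       - k ((1 - 3/4) * a + 3/4 * a') ((1 - 3/4) * A + 3/4 * A') (SA' - A') (Sv' - a')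
     = (a - a') * (g * (1/8 * (A - A') + 1/4 * (SA - SA')) + l * (1/8 * (a - a') + 1/4 * (Sv - Sv')))"
  unfolding k_def by (simp add: field_simps)


lemma mv_decomp:
  assumes bm: "std_brownian_motion M W" and b: "continuous_on {0..T} b" and T: "T \<ge> 0"
    and adm: "admissible (x i) T Y w" and others: "\<forall>j<n. admissible (x j) T (Xp j) (vp j)"
  shows "mv_objective M S0 \<sigma> b W \<gamma> lam T n a i Xp vp Y w =
    (prob_space.expectation M (\<lambda>\<omega>. - (LINT t:{0..T}|lborel. w t * unaffected_price S0 \<sigma> b W t \<omega>))
      - a / 2 * prob_space.variance M (\<lambda>\<omega>. - (LINT t:{0..T}|lborel. w t * unaffected_price S0 \<sigma> b W t \<omega>)))
    + - (LINT t:{0..T}|lborel. w t * (\<gamma> * ((Y t - Y 0) + (\<Sum>j\<in>{..<n} - {i}. Xp j t - Xp j 0))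
                                        + lam * (w t + (\<Sum>j\<in>{..<n} - {i}. vp j t))))"
proof -
  interpret prob_space M by (rule bm_facts(1)[OF bm])
  define P where "P t \<omega> = unaffected_price S0 \<sigma> b W t \<omega>" for t \<omega>
  define N where "N \<omega> = - (LINT t:{0..T}|lborel. w t * P t \<omega>)" for \<omega>
  define c where "c t = (Y t - Y 0) + (\<Sum>j\<in>{..<n} - {i}. Xp j t - Xp j 0)" for t
  define u where "u t = 1 * w t + 1 * (\<Sum>j\<in>{..<n} - {i}. vp j t)" for t
  define K where "K = (LINT t:{0..T}|lborel. w t * (\<gamma> * c t + lam * u t))"
  have wL: "L2on T w" by (rule adm_L2[OF adm])
  have cc: "continuous_on {0..T} c"
  proof -
    have "continuous_on {0..T} Y" by (rule adm_cont[OF adm])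
    moreover have "continuous_on {0..T} (Xp j)" if "j \<in> {..<n} - {i}" for j
      using adm_cont others that by auto
    ultimately show ?thesis unfolding c_def by (intro continuous_intros) auto
  qed
  have uL: "L2on T u" unfolding u_def
    by (intro L2_lin wL L2_sum) (use others adm_L2 in auto)
  have Ki: "set_integrable lborel {0..T} (\<lambda>t. w t * (\<gamma> * c t + lam * u t))"
    by (rule k_int[OF wL cc uL])
  have Nm: "(\<lambda>\<omega>. LINT t:{0..T}|lborel. w t * P t \<omega>) \<in> borel_measurable M"
    and N2: "integrable M (\<lambda>\<omega>. (LINT t:{0..T}|lborel. w t * P t \<omega>)\<^sup>2)"
    using N_L2[OF bm b T wL] unfolding P_def by auto
  have Ni: "integrable M N"
    unfolding N_def using square_integrable_imp_integrable[OF Nm N2] by simp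
  have rev: "revenue S0 \<sigma> b W \<gamma> lam T n i Xp vp Y w \<omega> = N \<omega> + - K" if \<omega>: "\<omega> \<in> space M" for \<omega>
  proof -
    have i1: "set_integrable lborel {0..T} (\<lambda>t. w t * P t \<omega>)"
      unfolding P_def by (rule L2_cont[OF wL P_cont[OF bm b \<omega>]])
    have "revenue S0 \<sigma> b W \<gamma> lam T n i Xp vp Y w \<omega> = - (LINT t:{0..T}|lborel. w t * P t \<omega> + w t * (\<gamma> * c t + lam * u t))"
      unfolding revenue_def P_def c_def u_def by (simp add: algebra_simps)
    also have "\<dots> = N \<omega> + - K" unfolding N_def K_def set_integral_add(2)[OF i1 Ki] by simp
    finally show ?thesis .
  qed
  have "mv_objective M S0 \<sigma> b W \<gamma> lam T n a i Xp vp Y w = (expectation N - a / 2 * variance N) + - K"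
    unfolding mv_objective_def by (rule mv_eq[OF bm_facts(1)[OF bm] Ni rev])
  then show ?thesis unfolding N_def P_def K_def c_def u_def by simp
qed

lemma N_lin:
  assumes bm: "std_brownian_motion M W" and b: "continuous_on {0..T} b" and \<omega>: "\<omega> \<in> space M"
    and v1: "L2on T v1" and v2: "L2on T v2"
  shows "- (LINT t:{0..T}|lborel. (p * v1 t + (1 - p) * v2 t) * unaffected_price S0 \<sigma> b W t \<omega>)
    = p * - (LINT t:{0..T}|lborel. v1 t * unaffected_price S0 \<sigma> b W t \<omega>)
      + (1 - p) * - (LINT t:{0..T}|lborel. v2 t * unaffected_price S0 \<sigma> b W t \<omega>)"
proof -
  have i1: "set_integrable lborel {0..T} (\<lambda>t. v1 t * unaffected_price S0 \<sigma> b W t \<omega>)"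
    by (rule L2_cont[OF v1 P_cont[OF bm b \<omega>]])
  have i2: "set_integrable lborel {0..T} (\<lambda>t. v2 t * unaffected_price S0 \<sigma> b W t \<omega>)"
    by (rule L2_cont[OF v2 P_cont[OF bm b \<omega>]])
  have "(LINT t:{0..T}|lborel. (p * v1 t + (1 - p) * v2 t) * unaffected_price S0 \<sigma> b W t \<omega>)
     = (LINT t:{0..T}|lborel. p * (v1 t * unaffected_price S0 \<sigma> b W t \<omega>) + (1 - p) * (v2 t * unaffected_price S0 \<sigma> b W t \<omega>))"
    by (simp add: algebra_simps)
  also have "\<dots> = p * (LINT t:{0..T}|lborel. v1 t * unaffected_price S0 \<sigma> b W t \<omega>) + (1 - p) * (LINT t:{0..T}|lborel. v2 t * unaffected_price S0 \<sigma> b W t \<omega>)"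
    using set_integral_add(2)[OF set_integrable_mult_right[OF i1] set_integrable_mult_right[OF i2]] by simp
  finally show ?thesis by simp
qed


lemma K_int:
  fixes n :: nat
  assumes T: "T \<ge> 0" and adm: "admissible (x i) T Y w" and others: "\<forall>j<n. admissible (x j) T (Xp j) (vp j)"
  shows "set_integrable lborel {0..T} (\<lambda>t. w t * (\<gamma> * ((Y t - Y 0) + (\<Sum>j\<in>{..<n} - {i}. Xp j t - Xp j 0))
                                        + lam * (w t + (\<Sum>j\<in>{..<n} - {i}. vp j t))))"
proof -
  define c where "c t = (Y t - Y 0) + (\<Sum>j\<in>{..<n} - {i}. Xp j t - Xp j 0)" for t
  define u where "u t = 1 * w t + 1 * (\<Sum>j\<in>{..<n} - {i}. vp j t)" for t
  have wL: "L2on T w" by (rule adm_L2[OF adm])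
  have cc: "continuous_on {0..T} c"
  proof -
    have "continuous_on {0..T} Y" by (rule adm_cont[OF adm])
    moreover have "continuous_on {0..T} (Xp j)" if "j \<in> {..<n} - {i}" for j
      using adm_cont others that by auto
    ultimately show ?thesis unfolding c_def by (intro continuous_intros) auto
  qed
  have uL: "L2on T u" unfolding u_def
    by (intro L2_lin wL L2_sum finite_Diff finite_lessThan) (use others adm_L2 in auto)
  show ?thesis using k_int[OF wL cc uL, of \<gamma> lam] unfolding c_def u_def by simp
qed

lemma sic:
  assumes "\<And>t. t \<in> A \<Longrightarrow> f t = g t"
  shows "(LINT t:A|M. f t) = (LINT t:A|M. (g t :: real))"
  unfolding set_lebesgue_integral_def using assms
  by (intro Bochner_Integration.integral_cong) (auto simp: indicator_def)

lemma Nf_L2: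
  assumes bm: "std_brownian_motion M W" and b: "continuous_on {0..T} b" and T: "T \<ge> 0" and f: "L2on T f"
  shows "(\<lambda>\<omega>. - (LINT t:{0..T}|lborel. f t * unaffected_price S0 \<sigma> b W t \<omega>)) \<in> borel_measurable M"
    "integrable M (\<lambda>\<omega>. (- (LINT t:{0..T}|lborel. f t * unaffected_price S0 \<sigma> b W t \<omega>))\<^sup>2)"
  using N_L2[OF bm b T f] by (auto intro: borel_measurable_uminus)

lemma agent_ineq:
  assumes bm: "std_brownian_motion M W" and b: "continuous_on {0..T} b" and T: "T \<ge> 0"
    and i: "i < n" and a: "0 \<le> a"
    and admX: "\<forall>j<n. admissible (x j) T (X j) (v j)" and admX': "\<forall>j<n. admissible (x j) T (X' j) (v' j)"
    and opt1: "\<forall>Y w. admissible (x i) T Y w \<longrightarrow> mv_objective M S0 \<sigma> b W \<gamma> lam T n a i X v Y w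
                   \<le> mv_objective M S0 \<sigma> b W \<gamma> lam T n a i X v (X i) (v i)"
    and opt2: "\<forall>Y w. admissible (x i) T Y w \<longrightarrow> mv_objective M S0 \<sigma> b W \<gamma> lam T n a i X' v' Y w
                   \<le> mv_objective M S0 \<sigma> b W \<gamma> lam T n a i X' v' (X' i) (v' i)"
  shows "(LINT t:{0..T}|lborel. (v i t - v' i t) *
     (\<gamma> * (1/8 * ((LINT s:{0..t}|lborel. v i s) - (LINT s:{0..t}|lborel. v' i s))
           + 1/4 * ((\<Sum>j<n. LINT s:{0..t}|lborel. v j s) - (\<Sum>j<n. LINT s:{0..t}|lborel. v' j s)))
      + lam * (1/8 * (v i t - v' i t) + 1/4 * ((\<Sum>j<n. v j t) - (\<Sum>j<n. v' j t))))) \<le> 0"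
proof -
  interpret prob_space M by (rule bm_facts(1)[OF bm])
  define Nf where "Nf w \<omega> = - (LINT t:{0..T}|lborel. w t * unaffected_price S0 \<sigma> b W t \<omega>)" for w \<omega>
  define G where "G w = expectation (Nf w) - a / 2 * variance (Nf w)" for w
  define Kf where "Kf Xp vp Y w = (LINT t:{0..T}|lborel. w t * (\<gamma> * ((Y t - Y 0) + (\<Sum>j\<in>{..<n} - {i}. Xp j t - Xp j 0))
                                        + lam * (w t + (\<Sum>j\<in>{..<n} - {i}. vp j t))))" for Xp vp Y w
  have dec: "mv_objective M S0 \<sigma> b W \<gamma> lam T n a i Xp vp Y w = G w + - Kf Xp vp Y w"
    if "admissible (x i) T Y w" "\<forall>j<n. admissible (x j) T (Xp j) (vp j)" for Xp vp Y w
    unfolding G_def Nf_def Kf_def by (rule mv_decomp[OF bm b T that])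
  have ai: "admissible (x i) T (X i) (v i)" and ai': "admissible (x i) T (X' i) (v' i)" using admX admX' i by auto
  define Y1 where "Y1 = (\<lambda>t. 3/4 * X i t + (1 - 3/4) * X' i t)"
  define w1 where "w1 = (\<lambda>t. 3/4 * v i t + (1 - 3/4) * v' i t)"
  define Y2 where "Y2 = (\<lambda>t. 3/4 * X' i t + (1 - 3/4) * X i t)"
  define w2 where "w2 = (\<lambda>t. 3/4 * v' i t + (1 - 3/4) * v i t)"
  have adm1: "admissible (x i) T Y1 w1" unfolding Y1_def w1_def by (rule adm_comb[OF ai ai'])
  have adm2: "admissible (x i) T Y2 w2" unfolding Y2_def w2_def by (rule adm_comb[OF ai' ai])
  have o1: "G w1 + - Kf X v Y1 w1 \<le> G (v i) + - Kf X v (X i) (v i)"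
    using opt1 adm1 ai admX by (simp add: dec)
  have o2: "G w2 + - Kf X' v' Y2 w2 \<le> G (v' i) + - Kf X' v' (X' i) (v' i)"
    using opt2 adm2 ai' admX' by (simp add: dec)
  have vL: "L2on T (v i)" and vL': "L2on T (v' i)" using adm_L2 ai ai' by auto
  have Nm: "Nf (v i) \<in> borel_measurable M" "integrable M (\<lambda>\<omega>. (Nf (v i) \<omega>)\<^sup>2)"
    using Nf_L2[OF bm b T vL] unfolding Nf_def by auto
  have Nm': "Nf (v' i) \<in> borel_measurable M" "integrable M (\<lambda>\<omega>. (Nf (v' i) \<omega>)\<^sup>2)"
    using Nf_L2[OF bm b T vL'] unfolding Nf_def by auto
  have Ni: "integrable M (Nf (v i))" by (rule square_integrable_imp_integrable[OF Nm])
  have Ni': "integrable M (Nf (v' i))" by (rule square_integrable_imp_integrable[OF Nm'])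
  have p1: "0 \<le> (3/4::real)" "(3/4::real) \<le> 1" by auto
  note conc0 = mv_concave[OF bm_facts(1)[OF bm] Nm(1) Nm'(1) Nm(2) Nm'(2) p1 a]
  have ic1: "integrable M (\<lambda>\<omega>. 3/4 * Nf (v i) \<omega> + (1 - 3/4) * Nf (v' i) \<omega>)" using Ni Ni' by auto
  have ic2: "integrable M (\<lambda>\<omega>. (1 - 3/4) * Nf (v i) \<omega> + 3/4 * Nf (v' i) \<omega>)" using Ni Ni' by auto
  have G1: "G w1 = (expectation (\<lambda>\<omega>. 3/4 * Nf (v i) \<omega> + (1 - 3/4) * Nf (v' i) \<omega>)
                 - a / 2 * variance (\<lambda>\<omega>. 3/4 * Nf (v i) \<omega> + (1 - 3/4) * Nf (v' i) \<omega>)) + 0"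
    unfolding G_def
  proof (rule mv_eq[OF bm_facts(1)[OF bm] ic1])
    fix \<omega> assume \<omega>: "\<omega> \<in> space M"
    show "Nf w1 \<omega> = 3/4 * Nf (v i) \<omega> + (1 - 3/4) * Nf (v' i) \<omega> + 0"
      unfolding Nf_def w1_def using N_lin[OF bm b \<omega> vL vL', of "3/4"] by simp
  qed
  have G2: "G w2 = (expectation (\<lambda>\<omega>. (1 - 3/4) * Nf (v i) \<omega> + 3/4 * Nf (v' i) \<omega>)
                 - a / 2 * variance (\<lambda>\<omega>. (1 - 3/4) * Nf (v i) \<omega> + 3/4 * Nf (v' i) \<omega>)) + 0"
    unfolding G_def
  proof (rule mv_eq[OF bm_facts(1)[OF bm] ic2])
    fix \<omega> assume \<omega>: "\<omega> \<in> space M"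
    show "Nf w2 \<omega> = (1 - 3/4) * Nf (v i) \<omega> + 3/4 * Nf (v' i) \<omega> + 0"
      unfolding Nf_def w2_def using N_lin[OF bm b \<omega> vL' vL, of "3/4"] by simp
  qed
  have conc: "G (v i) + G (v' i) \<le> G w1 + G w2"
    using conc0 unfolding G1 G2 by (simp add: G_def)
  have Kineq: "Kf X v (X i) (v i) - Kf X v Y1 w1 + (Kf X' v' (X' i) (v' i) - Kf X' v' Y2 w2) \<le> 0"
    using o1 o2 conc by linarith
  define k where "k Xp vp Y w t = w t * (\<gamma> * ((Y t - Y 0) + (\<Sum>j\<in>{..<n} - {i}. Xp j t - Xp j 0))
                                        + lam * (w t + (\<Sum>j\<in>{..<n} - {i}. vp j t)))" for Xp vp Y w and t :: real
  have Kfk: "Kf Xp vp Y w = (LINT t:{0..T}|lborel. k Xp vp Y w t)" for Xp vp Y w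
    unfolding Kf_def k_def ..
  have kI: "set_integrable lborel {0..T} (k Xp vp Y w)"
    if "admissible (x i) T Y w" "\<forall>j<n. admissible (x j) T (Xp j) (vp j)" for Xp vp Y w
    unfolding k_def by (rule K_int[OF T that])
  have i1: "set_integrable lborel {0..T} (k X v (X i) (v i))" by (rule kI[OF ai admX])
  have i2: "set_integrable lborel {0..T} (k X v Y1 w1)" by (rule kI[OF adm1 admX])
  have i3: "set_integrable lborel {0..T} (k X' v' (X' i) (v' i))" by (rule kI[OF ai' admX'])
  have i4: "set_integrable lborel {0..T} (k X' v' Y2 w2)" by (rule kI[OF adm2 admX'])
  have comb: "Kf X v (X i) (v i) - Kf X v Y1 w1 + (Kf X' v' (X' i) (v' i) - Kf X' v' Y2 w2)
     = (LINT t:{0..T}|lborel. (k X v (X i) (v i) t - k X v Y1 w1 t) + (k X' v' (X' i) (v' i) t - k X' v' Y2 w2 t))"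
    unfolding Kfk
    by (simp add: set_integral_add(2)[OF set_integral_diff(1)[OF i1 i2] set_integral_diff(1)[OF i3 i4]]
                  set_integral_diff(2)[OF i1 i2] set_integral_diff(2)[OF i3 i4])
  define A where "A j t = (LINT s:{0..t}|lborel. v j s)" for j t
  define A' where "A' j t = (LINT s:{0..t}|lborel. v' j s)" for j t
  have pt: "(k X v (X i) (v i) t - k X v Y1 w1 t) + (k X' v' (X' i) (v' i) t - k X' v' Y2 w2 t)
     = (v i t - v' i t) *
     (\<gamma> * (1/8 * (A i t - A' i t) + 1/4 * ((\<Sum>j<n. A j t) - (\<Sum>j<n. A' j t)))
      + lam * (1/8 * (v i t - v' i t) + 1/4 * ((\<Sum>j<n. v j t) - (\<Sum>j<n. v' j t))))"
    if t: "t \<in> {0..T}" for t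
  proof -
    have hX: "X j t - X j 0 = A j t" if "j < n" for j
      unfolding A_def by (rule adm_diff[OF _ t]) (use admX that in auto)
    have hX': "X' j t - X' j 0 = A' j t" if "j < n" for j
      unfolding A'_def by (rule adm_diff[OF _ t]) (use admX' that in auto)
    have s1: "(\<Sum>j\<in>{..<n} - {i}. X j t - X j 0) = (\<Sum>j<n. A j t) - A i t"
      using hX i by (simp add: sum_diff1)
    have s1': "(\<Sum>j\<in>{..<n} - {i}. X' j t - X' j 0) = (\<Sum>j<n. A' j t) - A' i t"
      using hX' i by (simp add: sum_diff1)
    have s2: "(\<Sum>j\<in>{..<n} - {i}. v j t) = (\<Sum>j<n. v j t) - v i t" using i by (simp add: sum_diff1)
    have s2': "(\<Sum>j\<in>{..<n} - {i}. v' j t) = (\<Sum>j<n. v' j t) - v' i t" using i by (simp add: sum_diff1)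
    have y1: "Y1 t - Y1 0 = 3/4 * A i t + (1 - 3/4) * A' i t"
      using hX[OF i] hX'[OF i] unfolding Y1_def by (simp add: algebra_simps)
    have y2: "Y2 t - Y2 0 = 3/4 * A' i t + (1 - 3/4) * A i t"
      using hX[OF i] hX'[OF i] unfolding Y2_def by (simp add: algebra_simps)
    show ?thesis
      unfolding k_def s1 s1' s2 s2' y1 y2 hX[OF i] hX'[OF i] w1_def w2_def
      by (simp add: field_simps)
  qed
  have "Kf X v (X i) (v i) - Kf X v Y1 w1 + (Kf X' v' (X' i) (v' i) - Kf X' v' Y2 w2)
     = (LINT t:{0..T}|lborel. (v i t - v' i t) *
     (\<gamma> * (1/8 * (A i t - A' i t) + 1/4 * ((\<Sum>j<n. A j t) - (\<Sum>j<n. A' j t)))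
      + lam * (1/8 * (v i t - v' i t) + 1/4 * ((\<Sum>j<n. v j t) - (\<Sum>j<n. v' j t)))))"
    unfolding comb by (rule sic) (rule pt)
  then show ?thesis using Kineq unfolding A_def A'_def by simp
qed



lemma sis:
  assumes "finite A" "\<And>j. j \<in> A \<Longrightarrow> set_integrable lborel S (f j :: real \<Rightarrow> real)"
  shows "(LINT t:S|lborel. (\<Sum>j\<in>A. f j t)) = (\<Sum>j\<in>A. LINT t:S|lborel. f j t)"
  using assms unfolding set_lebesgue_integral_def set_integrable_def scaleR_sum_right
  by (intro Bochner_Integration.integral_sum) auto

lemma sq_nonneg_int: "(LINT t:S|lborel. (f t :: real)\<^sup>2) \<ge> 0"
  unfolding set_lebesgue_integral_def by (intro Bochner_Integration.integral_nonneg) (auto simp: indicator_def)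

lemma lin4:
  assumes "set_integrable lborel S f1" "set_integrable lborel S f2" "set_integrable lborel S f3" "set_integrable lborel S f4"
  shows "(LINT t:S|lborel. c1 * f1 t + c2 * f2 t + (c3 * f3 t + c4 * f4 t))
     = c1 * (LINT t:S|lborel. f1 t) + c2 * (LINT t:S|lborel. f2 t) + (c3 * (LINT t:S|lborel. f3 t) + c4 * (LINT t:S|lborel. (f4 t :: real)))"
proof -
  note m = set_integrable_mult_right[OF assms(1), of c1] set_integrable_mult_right[OF assms(2), of c2]
    set_integrable_mult_right[OF assms(3), of c3] set_integrable_mult_right[OF assms(4), of c4]
  show ?thesis
    by (simp add: set_integral_add(2)[OF set_integral_add(1)[OF m(1) m(2)] set_integral_add(1)[OF m(3) m(4)]]
        set_integral_add(2)[OF m(1) m(2)] set_integral_add(2)[OF m(3) m(4)])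
qed

theorem lemma4p1:
  fixes M :: "'a measure" and W :: "real \<Rightarrow> 'a \<Rightarrow> real"
    and S0 \<sigma> \<gamma> lam T :: real and b :: "real \<Rightarrow> real"
    and n :: nat and \<alpha> x :: "nat \<Rightarrow> real" and X X' :: "nat \<Rightarrow> real \<Rightarrow> real"
  assumes "T > 0"
    and "std_brownian_motion M W"
    and "\<sigma> \<ge> 0" and "\<gamma> \<ge> 0" and "lam > 0"
    and "continuous_on {0..T} b"
    and "\<forall>i<n. \<alpha> i \<ge> 0"
    and "nash_equilibrium_mv M S0 \<sigma> b W \<gamma> lam T n \<alpha> x X"
    and "nash_equilibrium_mv M S0 \<sigma> b W \<gamma> lam T n \<alpha> x X'"
  shows "\<forall>i<n. \<forall>t\<in>{0..T}. X i t = X' i t"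
proof -
  have T: "T \<ge> 0" using assms(1) by simp
  note bm = assms(2) and b = assms(6)
  have \<gamma>: "\<gamma> \<ge> 0" and lam: "lam > 0" using assms by auto
  obtain v where admX: "\<forall>j<n. admissible (x j) T (X j) (v j)"
    and opt1: "\<forall>i<n. \<forall>Y w. admissible (x i) T Y w \<longrightarrow> mv_objective M S0 \<sigma> b W \<gamma> lam T n (\<alpha> i) i X v Y w
                   \<le> mv_objective M S0 \<sigma> b W \<gamma> lam T n (\<alpha> i) i X v (X i) (v i)"
    using assms(8) unfolding nash_equilibrium_mv_def by blast
  obtain v' where admX': "\<forall>j<n. admissible (x j) T (X' j) (v' j)"
    and opt2: "\<forall>i<n. \<forall>Y w. admissible (x i) T Y w \<longrightarrow> mv_objective M S0 \<sigma> b W \<gamma> lam T n (\<alpha> i) i X' v' Y w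
                   \<le> mv_objective M S0 \<sigma> b W \<gamma> lam T n (\<alpha> i) i X' v' (X' i) (v' i)"
    using assms(9) unfolding nash_equilibrium_mv_def by blast
  define d where "d j t = 1 * v j t + (-1) * v' j t" for j t
  define ds where "ds t = (\<Sum>j<n. d j t)" for t
  define Id where "Id j t = (LINT s:{0..t}|lborel. d j s)" for j t
  define Is where "Is t = (LINT s:{0..t}|lborel. ds s)" for t
  have vL: "L2on T (v j)" "L2on T (v' j)" if "j < n" for j using admX admX' that adm_L2 by auto
  have dL: "L2on T (d j)" if "j < n" for j unfolding d_def by (rule L2_lin[OF vL[OF that]])
  have dsL: "L2on T ds" unfolding ds_def by (rule L2_sum) (auto intro: dL)
  have Idc: "continuous_on {0..T} (Id j)" if "j < n" for j
    unfolding Id_def by (rule I_cont[OF L2_L1[OF dL[OF that]]])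
  have Isc: "continuous_on {0..T} Is" unfolding Is_def by (rule I_cont[OF L2_L1[OF dsL]])
  define ai where "ai j = (LINT t:{0..T}|lborel. d j t * Id j t)" for j
  define bi where "bi j = (LINT t:{0..T}|lborel. (d j t)\<^sup>2)" for j
  define ci where "ci j = (LINT t:{0..T}|lborel. d j t * Is t)" for j
  define ei where "ei j = (LINT t:{0..T}|lborel. d j t * ds t)" for j
  have each: "1/8 * (\<gamma> * ai i + lam * bi i) + 1/4 * (\<gamma> * ci i + lam * ei i) \<le> 0" if i: "i < n" for i
  proof -
    have a: "0 \<le> \<alpha> i" using assms(7) i by blast
    have o1: "\<forall>Y w. admissible (x i) T Y w \<longrightarrow> mv_objective M S0 \<sigma> b W \<gamma> lam T n (\<alpha> i) i X v Y w
                   \<le> mv_objective M S0 \<sigma> b W \<gamma> lam T n (\<alpha> i) i X v (X i) (v i)" using opt1 i by blast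
    have o2: "\<forall>Y w. admissible (x i) T Y w \<longrightarrow> mv_objective M S0 \<sigma> b W \<gamma> lam T n (\<alpha> i) i X' v' Y w
                   \<le> mv_objective M S0 \<sigma> b W \<gamma> lam T n (\<alpha> i) i X' v' (X' i) (v' i)" using opt2 i by blast
    note ineq = agent_ineq[OF bm b T i a admX admX' o1 o2]
    have pt: "(v i t - v' i t) *
     (\<gamma> * (1/8 * ((LINT s:{0..t}|lborel. v i s) - (LINT s:{0..t}|lborel. v' i s))
           + 1/4 * ((\<Sum>j<n. LINT s:{0..t}|lborel. v j s) - (\<Sum>j<n. LINT s:{0..t}|lborel. v' j s)))
      + lam * (1/8 * (v i t - v' i t) + 1/4 * ((\<Sum>j<n. v j t) - (\<Sum>j<n. v' j t))))
      = \<gamma>/8 * (d i t * Id i t) + lam/8 * (d i t)\<^sup>2 + (\<gamma>/4 * (d i t * Is t) + lam/4 * (d i t * ds t))"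
      if t: "t \<in> {0..T}" for t
    proof -
      have e1: "Id j t = (LINT s:{0..t}|lborel. v j s) - (LINT s:{0..t}|lborel. v' j s)" if "j < n" for j
        unfolding Id_def d_def using I_lin[OF L2_L1[OF vL(1)[OF that]] L2_L1[OF vL(2)[OF that]] t, of 1 "-1"] by simp
      have "Is t = (\<Sum>j<n. Id j t)"
        unfolding Is_def ds_def Id_def by (rule I_sum[OF _ _ t]) (auto intro: L2_L1 dL)
      also have "\<dots> = (\<Sum>j<n. LINT s:{0..t}|lborel. v j s) - (\<Sum>j<n. LINT s:{0..t}|lborel. v' j s)"
        using e1 by (simp add: sum_subtractf)
      finally have e2: "Is t = (\<Sum>j<n. LINT s:{0..t}|lborel. v j s) - (\<Sum>j<n. LINT s:{0..t}|lborel. v' j s)" .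
      have e3: "ds t = (\<Sum>j<n. v j t) - (\<Sum>j<n. v' j t)" unfolding ds_def d_def by (simp add: sum_subtractf)
      have e4: "d i t = v i t - v' i t" unfolding d_def by simp
      show ?thesis unfolding e1[OF i, symmetric] e2[symmetric] e3[symmetric] e4[symmetric]
        by (simp add: algebra_simps power2_eq_square)
    qed
    have f1: "set_integrable lborel {0..T} (\<lambda>t. d i t * Id i t)" by (rule L2_cont[OF dL[OF i] Idc[OF i]])
    have f2: "set_integrable lborel {0..T} (\<lambda>t. (d i t)\<^sup>2)" using dL[OF i] by (simp add: L2on_def)
    have f3: "set_integrable lborel {0..T} (\<lambda>t. d i t * Is t)" by (rule L2_cont[OF dL[OF i] Isc])
    have f4: "set_integrable lborel {0..T} (\<lambda>t. d i t * ds t)" by (rule L2_mult[OF dL[OF i] dsL])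
    have "(LINT t:{0..T}|lborel. (v i t - v' i t) *
     (\<gamma> * (1/8 * ((LINT s:{0..t}|lborel. v i s) - (LINT s:{0..t}|lborel. v' i s))
           + 1/4 * ((\<Sum>j<n. LINT s:{0..t}|lborel. v j s) - (\<Sum>j<n. LINT s:{0..t}|lborel. v' j s)))
      + lam * (1/8 * (v i t - v' i t) + 1/4 * ((\<Sum>j<n. v j t) - (\<Sum>j<n. v' j t)))))
      = (LINT t:{0..T}|lborel. \<gamma>/8 * (d i t * Id i t) + lam/8 * (d i t)\<^sup>2 + (\<gamma>/4 * (d i t * Is t) + lam/4 * (d i t * ds t)))"
      by (rule sic) (rule pt)
    also have "\<dots> = \<gamma>/8 * ai i + lam/8 * bi i + (\<gamma>/4 * ci i + lam/4 * ei i)"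
      unfolding ai_def bi_def ci_def ei_def by (rule lin4[OF f1 f2 f3 f4])
    finally show ?thesis using ineq by (simp add: algebra_simps)
  qed
  have "(\<Sum>i<n. 1/8 * (\<gamma> * ai i + lam * bi i) + 1/4 * (\<gamma> * ci i + lam * ei i)) \<le> 0"
    using each by (intro sum_nonpos) auto
  then have S: "1/8 * \<gamma> * (\<Sum>i<n. ai i) + 1/8 * lam * (\<Sum>i<n. bi i) + 1/4 * \<gamma> * (\<Sum>i<n. ci i) + 1/4 * lam * (\<Sum>i<n. ei i) \<le> 0"
    by (simp add: sum.distrib sum_distrib_left algebra_simps sum_divide_distrib)
  have sc: "(\<Sum>i<n. ci i) = (LINT t:{0..T}|lborel. ds t * Is t)"
  proof -
    have "(\<Sum>i<n. ci i) = (LINT t:{0..T}|lborel. (\<Sum>i<n. d i t * Is t))"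
      unfolding ci_def by (rule sis[symmetric]) (auto intro: L2_cont dL Isc)
    also have "\<dots> = (LINT t:{0..T}|lborel. ds t * Is t)" unfolding ds_def by (simp add: sum_distrib_right)
    finally show ?thesis .
  qed
  have se: "(\<Sum>i<n. ei i) = (LINT t:{0..T}|lborel. (ds t)\<^sup>2)"
  proof -
    have "(\<Sum>i<n. ei i) = (LINT t:{0..T}|lborel. (\<Sum>i<n. d i t * ds t))"
      unfolding ei_def by (rule sis[symmetric]) (auto intro: L2_mult dL dsL)
    also have "\<dots> = (LINT t:{0..T}|lborel. (ds t)\<^sup>2)" unfolding ds_def by (simp add: sum_distrib_right power2_eq_square)
    finally show ?thesis .
  qed
  have ai0: "ai i \<ge> 0" if "i < n" for i
    unfolding ai_def Id_def by (rule fI_nonneg[OF L2_L1[OF dL[OF that]]])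
  have c0: "(LINT t:{0..T}|lborel. ds t * Is t) \<ge> 0"
    unfolding Is_def by (rule fI_nonneg[OF L2_L1[OF dsL]])
  have e0: "(LINT t:{0..T}|lborel. (ds t)\<^sup>2) \<ge> 0" by (rule sq_nonneg_int)
  have bi0: "bi i \<ge> 0" if "i < n" for i unfolding bi_def by (rule sq_nonneg_int)
  have t1: "0 \<le> 1/8 * \<gamma> * (\<Sum>i<n. ai i)" using \<gamma> ai0 by (intro mult_nonneg_nonneg sum_nonneg) auto
  have t2: "0 \<le> 1/4 * \<gamma> * (\<Sum>i<n. ci i)" using \<gamma> c0 unfolding sc by simp
  have t3: "0 \<le> 1/4 * lam * (\<Sum>i<n. ei i)" using lam e0 unfolding se by simp
  have "1/8 * lam * (\<Sum>i<n. bi i) \<le> 0" using S t1 t2 t3 by linarith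
  then have "(\<Sum>i<n. bi i) \<le> 0" using lam by (simp add: mult_le_0_iff)
  moreover have "(\<Sum>i<n. bi i) \<ge> 0" by (rule sum_nonneg) (use bi0 in auto)
  ultimately have sb: "(\<Sum>i<n. bi i) = 0" by linarith
  have bz: "bi i = 0" if "i < n" for i
    using sum_nonneg_eq_0_iff[of "{..<n}" bi] bi0 that sb by auto
  show ?thesis
  proof (intro allI impI ballI)
    fix i t assume i: "i < n" and t: "t \<in> {0..T}"
    have "(LINT s:{0..t}|lborel. d i s) = 0"
      by (rule zero_I[OF dL[OF i] _ t]) (use bz[OF i] in \<open>simp add: bi_def\<close>)
    moreover have "(LINT s:{0..t}|lborel. d i s) = (LINT s:{0..t}|lborel. v i s) - (LINT s:{0..t}|lborel. v' i s)"
      unfolding d_def using I_lin[OF L2_L1[OF vL(1)[OF i]] L2_L1[OF vL(2)[OF i]] t, of 1 "-1"] by simp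
    moreover have "X i t = x i + (LINT s:{0..t}|lborel. v i s)" "X' i t = x i + (LINT s:{0..t}|lborel. v' i s)"
      using admX admX' i t unfolding admissible_def by auto
    ultimately show "X i t = X' i t" by simp
  qed
qed


end
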